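(* Consider simultaneous double $Q$-learning (SDQ) on a finite MDP as described in the context, with constant step-size $\alpha\in(0,1)$, discount factor $\gamma\in(0,1)$, rewards bounded by $1$ in absolute value, i.i.d. sampling of state-action pairs from a distribution $d$ with $d(s,a)>0$ for all $(s,a)$, and initial estimators satisfying $\|Q_0^A\|_\infty\le 1$, $\|Q_0^B\|_\infty\le 1$. Let $d_{\min}=\min_{(s,a)}d(s,a)$ and $\rho=1-\alpha d_{\min}(1-\gamma)$. Then for every $k\ge 0$, \[ \mathbb{E}\big[\|Q_k^A-Q^*\|_\infty\big]\le \frac{120\,\alpha^{1/2}|\mathcal{S}\times\mathcal{A}|}{d_{\min}^{9/2}(1-\gamma)^{11/2}}+\frac{48\,|\mathcal{S}\times\mathcal{A}|^{3/2}}{1-\gamma}\cdot\frac{\rho^{-4}(-8)^4}{(\ln\rho)^4}\,\rho^{-4/\ln\rho}\,\rho^{k/2}, \] and the same bound holds for $\mathbb{E}[\|Q_k^B-Q^*\|_\infty]$.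
   Context: Finite MDP: state space $\mathcal{S}=\{1,\dots,|\mathcal{S}|\}$, action space $\mathcal{A}=\{1,\dots,|\mathcal{A}|\}$, transition probabilities $P(s'|s,a)$, deterministic reward $r(s,a,s')$ with $\max|r(s,a,s')|\le 1$, discount $\gamma\in(0,1)$; the MDP is assumed ergodic. $Q^*$ is the optimal action-value function. A behavior policy $\beta$ and a stationary state distribution $p$ give $d(s,a)=p(s)\beta(a|s)$, assumed $>0$ for all $(s,a)$. At each iteration $k=0,1,\dots$, $(s_k,a_k)$ is drawn independently from $d$, $s_{k+1}$ is drawn from $P(\cdot|s_k,a_k)$, and $r_{k+1}=r(s_k,a_k,s_{k+1})$. SDQ maintains two tables $Q_k^A,Q_k^B:\mathcal{S}\times\mathcal{A}\to\mathbb{R}$ and updates only the entry $(s_k,a_k)$ of each (other entries unchanged): $Q_{k+1}^A(s_k,a_k)=Q_k^A(s_k,a_k)+\alpha\{r_{k+1}+\gamma Q_k^A(s_{k+1},\arg\max_{a}Q_k^B(s_{k+1},a))-Q_k^A(s_k,a_k)\}$, $Q_{k+1}^B(s_k,a_k)=Q_k^B(s_k,a_k)+\alpha\{r_{k+1}+\gamma Q_k^B(s_{k+1},\arg\max_{a}Q_k^A(s_{k+1},a))-Q_k^B(s_k,a_k)\}$, with constant step-size $\alpha\in(0,1)$. $|\mathcal{S}\times\mathcal{A}|=|\mathcal{S}||\mathcal{A}|$. *)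

theory Defs
  imports "HOL-Probability.Probability"
begin

definition supnorm :: "('s::finite \<Rightarrow> 'a::finite \<Rightarrow> real) \<Rightarrow> real" where
  "supnorm Q = Max (range (\<lambda>(s,a). \<bar>Q s a\<bar>))"

text \<open>Bellman optimality operator and the optimal action-value function Q*
  (its unique fixed point, which exists since gamma < 1).\<close>

definition bellman_opt ::
  "('s::finite \<Rightarrow> 'a::finite \<Rightarrow> 's pmf) \<Rightarrow> ('s \<Rightarrow> 'a \<Rightarrow> 's \<Rightarrow> real) \<Rightarrow> real
   \<Rightarrow> ('s \<Rightarrow> 'a \<Rightarrow> real) \<Rightarrow> ('s \<Rightarrow> 'a \<Rightarrow> real)" where
  "bellman_opt P r \<gamma> Q = (\<lambda>s a. measure_pmf.expectation (P s a)
      (\<lambda>s'. r s a s' + \<gamma> * Max (range (Q s'))))"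

definition Qstar ::
  "('s::finite \<Rightarrow> 'a::finite \<Rightarrow> 's pmf) \<Rightarrow> ('s \<Rightarrow> 'a \<Rightarrow> 's \<Rightarrow> real) \<Rightarrow> real
   \<Rightarrow> ('s \<Rightarrow> 'a \<Rightarrow> real)" where
  "Qstar P r \<gamma> = (THE Q. bellman_opt P r \<gamma> Q = Q)"

text \<open>One SDQ update with observed transition (s,a,s'). The argument amax is
  the (arbitrary but fixed) tie-breaking rule realising arg max over actions.\<close>

definition sdq_step ::
  "(('a \<Rightarrow> real) \<Rightarrow> 'a) \<Rightarrow> real \<Rightarrow> real \<Rightarrow> ('s \<Rightarrow> 'a \<Rightarrow> 's \<Rightarrow> real)
   \<Rightarrow> ('s \<Rightarrow> 'a \<Rightarrow> real) \<times> ('s \<Rightarrow> 'a \<Rightarrow> real) \<Rightarrow> 's \<times> 'a \<times> 's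
   \<Rightarrow> ('s \<Rightarrow> 'a \<Rightarrow> real) \<times> ('s \<Rightarrow> 'a \<Rightarrow> real)" where
  "sdq_step amax \<alpha> \<gamma> r QQ x =
     (case QQ of (QA, QB) \<Rightarrow> case x of (s, a, s') \<Rightarrow>
       (QA(s := (QA s)(a := QA s a + \<alpha> * (r s a s' + \<gamma> * QA s' (amax (QB s')) - QA s a))),
        QB(s := (QB s)(a := QB s a + \<alpha> * (r s a s' + \<gamma> * QB s' (amax (QA s')) - QB s a)))))"

definition sample_pmf :: "('s \<times> 'a) pmf \<Rightarrow> ('s \<Rightarrow> 'a \<Rightarrow> 's pmf) \<Rightarrow> ('s \<times> 'a \<times> 's) pmf" where
  "sample_pmf d P = d \<bind> (\<lambda>(s,a). map_pmf (\<lambda>s'. (s, a, s')) (P s a))"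

text \<open>Law of (Q_k^A, Q_k^B): samples are i.i.d. across iterations.\<close>

primrec sdq_dist ::
  "(('a \<Rightarrow> real) \<Rightarrow> 'a) \<Rightarrow> real \<Rightarrow> real \<Rightarrow> ('s \<Rightarrow> 'a \<Rightarrow> 's \<Rightarrow> real)
   \<Rightarrow> ('s \<times> 'a) pmf \<Rightarrow> ('s \<Rightarrow> 'a \<Rightarrow> 's pmf)
   \<Rightarrow> ('s \<Rightarrow> 'a \<Rightarrow> real) \<Rightarrow> ('s \<Rightarrow> 'a \<Rightarrow> real) \<Rightarrow> nat
   \<Rightarrow> (('s \<Rightarrow> 'a \<Rightarrow> real) \<times> ('s \<Rightarrow> 'a \<Rightarrow> real)) pmf" where
  "sdq_dist amax \<alpha> \<gamma> r d P QA0 QB0 0 = return_pmf (QA0, QB0)"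
| "sdq_dist amax \<alpha> \<gamma> r d P QA0 QB0 (Suc k) =
     sdq_dist amax \<alpha> \<gamma> r d P QA0 QB0 k \<bind>
       (\<lambda>QQ. map_pmf (sdq_step amax \<alpha> \<gamma> r QQ) (sample_pmf d P))"

end

theory Submission
  imports Defs
begin

lemma supnorm_ge: "\<bar>Q s a\<bar> \<le> supnorm (Q :: 's::finite \<Rightarrow> 'a::finite \<Rightarrow> real)"
  unfolding supnorm_def by (rule Max_ge) auto

lemma supnorm_le: "(\<And>s a. \<bar>Q s a\<bar> \<le> B) \<Longrightarrow> supnorm (Q :: 's::finite \<Rightarrow> 'a::finite \<Rightarrow> real) \<le> B"
  unfolding supnorm_def by (subst Max_le_iff) auto

lemma supnorm_nonneg: "0 \<le> supnorm (Q :: 's::finite \<Rightarrow> 'a::finite \<Rightarrow> real)"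
  by (meson abs_ge_zero order_trans supnorm_ge)

lemma Max_range_amax:
  fixes f :: "'a::finite \<Rightarrow> real"
  assumes "\<And>b. f b \<le> f (amax f)"
  shows "Max (range f) = f (amax f)"
  using assms by (intro Max_eqI) auto

lemma Max_range_diff:
  fixes f g :: "'a::finite \<Rightarrow> real"
  assumes "\<And>b. \<bar>f b - g b\<bar> \<le> B"
  shows "\<bar>Max (range f) - Max (range g)\<bar> \<le> B"
proof -
  have "Max (range f) \<in> range f" by (rule Max_in) auto
  then obtain b1 where b1: "Max (range f) = f b1" by blast
  have "Max (range g) \<in> range g" by (rule Max_in) auto
  then obtain b2 where b2: "Max (range g) = g b2" by blast
  have "f b2 \<le> Max (range f)" by (rule Max_ge) auto
  then have "f b2 \<le> f b1" using b1 by simp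
  moreover have "g b1 \<le> Max (range g)" by (rule Max_ge) auto
  then have "g b1 \<le> g b2" using b2 by simp
  ultimately show ?thesis using assms[of b1] assms[of b2] b1 b2 by (simp add: abs_le_iff)
qed

lemma exp_pmf_sum:
  fixes M :: "'s::finite pmf"
  shows "measure_pmf.expectation M f = (\<Sum>x\<in>UNIV. pmf M x * f x)"
  by (subst integral_measure_pmf_real[where A=UNIV]) (auto simp: mult.commute)

lemma pmf_sum_UNIV: "(\<Sum>x\<in>UNIV. pmf (M :: 's::finite pmf) x) = 1"
  using sum_pmf_eq_1[of UNIV M] by auto

lemma sum_pmf_bound:
  fixes M :: "'s::finite pmf"
  assumes "\<And>x. \<bar>f x\<bar> \<le> B"
  shows "\<bar>\<Sum>x\<in>UNIV. pmf M x * f x\<bar> \<le> B"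
proof -
  have "\<bar>\<Sum>x\<in>UNIV. pmf M x * f x\<bar> \<le> (\<Sum>x\<in>UNIV. \<bar>pmf M x * f x\<bar>)" by (rule sum_abs)
  also have "\<dots> \<le> (\<Sum>x\<in>UNIV. pmf M x * B)"
    by (intro sum_mono) (simp add: abs_mult mult_left_mono assms)
  also have "\<dots> = B" using pmf_sum_UNIV[of M] by (simp add: sum_distrib_right[symmetric])
  finally show ?thesis .
qed

lemma contraction_fix:
  fixes T :: "('s::finite \<Rightarrow> 'a::finite \<Rightarrow> real) \<Rightarrow> ('s \<Rightarrow> 'a \<Rightarrow> real)"
  assumes g: "0 \<le> \<gamma>" "\<gamma> < 1"
    and c: "\<And>Q1 Q2. supnorm (\<lambda>s a. T Q1 s a - T Q2 s a) \<le> \<gamma> * supnorm (\<lambda>s a. Q1 s a - Q2 s a)"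
  shows "\<exists>!Q. T Q = Q"
proof -
  have cm: "supnorm (\<lambda>s a. (T^^m) Q1 s a - (T^^m) Q2 s a) \<le> \<gamma>^m * supnorm (\<lambda>s a. Q1 s a - Q2 s a)" for m Q1 Q2
  proof (induction m)
    case 0 then show ?case by simp
  next
    case (Suc m)
    have "supnorm (\<lambda>s a. (T^^Suc m) Q1 s a - (T^^Suc m) Q2 s a) \<le> \<gamma> * supnorm (\<lambda>s a. (T^^m) Q1 s a - (T^^m) Q2 s a)"
      using c by simp
    also have "\<dots> \<le> \<gamma> * (\<gamma>^m * supnorm (\<lambda>s a. Q1 s a - Q2 s a))"
      using Suc g by (simp add: mult_left_mono)
    finally show ?case by (simp add: mult.assoc)
  qed
  have uniq: "A = B" if "(T^^m) A = A" "(T^^m) B = B" "0 < m" for m A B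
  proof -
    have "supnorm (\<lambda>s a. A s a - B s a) \<le> \<gamma>^m * supnorm (\<lambda>s a. A s a - B s a)"
      using cm[of m A B] that by simp
    moreover have "\<gamma>^m < 1" using g that by (simp add: power_less_one_iff)
    ultimately have "(1 - \<gamma>^m) * supnorm (\<lambda>s a. A s a - B s a) \<le> 0"
      by (simp add: algebra_simps)
    with \<open>\<gamma>^m < 1\<close> have "supnorm (\<lambda>s a. A s a - B s a) \<le> 0"
      by (simp add: mult_le_0_iff)
    then have "\<bar>A s a - B s a\<bar> \<le> 0" for s a
      using supnorm_ge[of "\<lambda>s a. A s a - B s a" s a] by simp
    then show ?thesis by (intro ext) auto
  qed
  define n where "n = real CARD('s \<times> 'a)"
  have "0 < CARD('s \<times> 'a)" by (rule finite_UNIV_card_ge_0) simp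
  then have n1: "n \<ge> 1" unfolding n_def by linarith
  have "0 < 1 / n" using n1 by simp
  from real_arch_pow_inv[OF this g(2)] obtain m where m: "\<gamma>^m < 1 / n" by blast
  have m0: "0 < m"
  proof (rule ccontr)
    assume "\<not> 0 < m"
    then have "m = 0" by simp
    with m have "1 < 1 / n" by simp
    with n1 show False by (simp add: field_simps)
  qed
  define v2f :: "real^('s \<times> 'a) \<Rightarrow> ('s \<Rightarrow> 'a \<Rightarrow> real)" where "v2f = (\<lambda>v s a. v $ (s, a))"
  define f2v :: "('s \<Rightarrow> 'a \<Rightarrow> real) \<Rightarrow> real^('s \<times> 'a)" where "f2v = (\<lambda>Q. \<chi> i. Q (fst i) (snd i))"
  have vf: "v2f (f2v Q) = Q" for Q unfolding v2f_def f2v_def by simp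
  define G where "G = (\<lambda>v. f2v ((T^^m) (v2f v)))"
  have d1: "supnorm (\<lambda>s a. v2f v s a - v2f w s a) \<le> dist v w" for v w
  proof (rule supnorm_le)
    fix s a
    have "\<bar>(v - w) $ (s, a)\<bar> \<le> norm (v - w)" by (rule component_le_norm_cart)
    then show "\<bar>v2f v s a - v2f w s a\<bar> \<le> dist v w" by (simp add: v2f_def dist_norm)
  qed
  have d2: "dist (f2v A) (f2v B) \<le> n * supnorm (\<lambda>s a. A s a - B s a)" for A B
  proof -
    have "dist (f2v A) (f2v B) \<le> (\<Sum>i\<in>UNIV. \<bar>(f2v A - f2v B) $ i\<bar>)"
      unfolding dist_norm by (rule norm_le_l1_cart)
    also have "\<dots> \<le> (\<Sum>i\<in>(UNIV::('s\<times>'a) set). supnorm (\<lambda>s a. A s a - B s a))"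
    proof (intro sum_mono)
      fix i :: "'s \<times> 'a"
      show "\<bar>(f2v A - f2v B) $ i\<bar> \<le> supnorm (\<lambda>s a. A s a - B s a)"
        using supnorm_ge[of "\<lambda>s a. A s a - B s a" "fst i" "snd i"] by (simp add: f2v_def)
    qed
    finally show ?thesis by (simp add: n_def)
  qed
  have "\<exists>!v. G v = v"
  proof (rule banach_fix_type)
    show "0 \<le> n * \<gamma>^m" using n1 g by simp
    show "n * \<gamma>^m < 1" using m n1 by (simp add: field_simps)
    show "\<forall>x y. dist (G x) (G y) \<le> n * \<gamma> ^ m * dist x y"
    proof (intro allI)
      fix x y
      have "dist (G x) (G y) \<le> n * supnorm (\<lambda>s a. (T^^m) (v2f x) s a - (T^^m) (v2f y) s a)"
        unfolding G_def by (rule d2)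
      also have "\<dots> \<le> n * (\<gamma>^m * supnorm (\<lambda>s a. v2f x s a - v2f y s a))"
        using cm n1 by (intro mult_left_mono) auto
      also have "\<dots> \<le> n * (\<gamma>^m * dist x y)"
        using d1 n1 g by (intro mult_left_mono) auto
      finally show "dist (G x) (G y) \<le> n * \<gamma> ^ m * dist x y" by (simp add: mult.assoc)
    qed
  qed
  then obtain v where v: "G v = v" by auto
  define Q where "Q = v2f v"
  have fQ: "(T^^m) Q = Q" using arg_cong[OF v, of v2f] by (simp add: G_def Q_def vf)
  have "(T^^m) (T Q) = T Q" by (metis fQ funpow_swap1)
  then have TQ: "T Q = Q" using uniq[OF _ fQ m0] by blast
  show ?thesis
  proof (rule ex1I[of _ Q])
    show "T Q = Q" by (rule TQ)
    fix Q' assume "T Q' = Q'"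
    then show "Q' = Q" using uniq[of 1 Q' Q] TQ by simp
  qed
qed


lemma exp_finite_sum:
  assumes "finite (set_pmf M)"
  shows "measure_pmf.expectation M f = (\<Sum>x\<in>set_pmf M. f x * pmf M x)"
  by (rule integral_measure_pmf_real) (auto simp: assms)

lemma exp_bind_finite:
  fixes f :: "'b \<Rightarrow> real"
  assumes fM: "finite (set_pmf M)" and fN: "\<And>x. x \<in> set_pmf M \<Longrightarrow> finite (set_pmf (N x))"
  shows "measure_pmf.expectation (bind_pmf M N) f
         = measure_pmf.expectation M (\<lambda>x. measure_pmf.expectation (N x) f)"
proof -
  define A where "A = (\<Union>x\<in>set_pmf M. set_pmf (N x))"
  have fA: "finite A" unfolding A_def using fM fN by auto
  have sb: "set_pmf (bind_pmf M N) = A" unfolding A_def by simp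
  have pb: "pmf (bind_pmf M N) y = (\<Sum>x\<in>set_pmf M. pmf (N x) y * pmf M x)" for y
    unfolding pmf_bind by (rule integral_measure_pmf_real) (auto simp: fM)
  have inner: "measure_pmf.expectation (N x) f = (\<Sum>y\<in>A. f y * pmf (N x) y)" if "x \<in> set_pmf M" for x
    by (rule integral_measure_pmf_real) (use that fA in \<open>auto simp: A_def\<close>)
  have "measure_pmf.expectation (bind_pmf M N) f = (\<Sum>y\<in>A. f y * pmf (bind_pmf M N) y)"
    by (rule integral_measure_pmf_real) (use fA in \<open>auto simp: A_def\<close>)
  also have "\<dots> = (\<Sum>y\<in>A. \<Sum>x\<in>set_pmf M. f y * pmf (N x) y * pmf M x)"
    by (simp add: pb sum_distrib_left mult.assoc)
  also have "\<dots> = (\<Sum>x\<in>set_pmf M. \<Sum>y\<in>A. f y * pmf (N x) y * pmf M x)"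
    by (rule sum.swap)
  also have "\<dots> = (\<Sum>x\<in>set_pmf M. measure_pmf.expectation (N x) f * pmf M x)"
    by (intro sum.cong refl) (simp add: inner sum_distrib_right)
  also have "\<dots> = measure_pmf.expectation M (\<lambda>x. measure_pmf.expectation (N x) f)"
    by (rule exp_finite_sum[symmetric]) (rule fM)
  finally show ?thesis .
qed

lemma exp_mono_fin:
  fixes f g :: "'b \<Rightarrow> real"
  assumes "finite (set_pmf M)" "\<And>x. x \<in> set_pmf M \<Longrightarrow> f x \<le> g x"
  shows "measure_pmf.expectation M f \<le> measure_pmf.expectation M g"
  unfolding exp_finite_sum[OF assms(1)]
  by (intro sum_mono mult_right_mono) (auto simp: assms(2))

lemma exp_lin_fin:
  fixes f g :: "'b \<Rightarrow> real"
  assumes "finite (set_pmf M)"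
  shows "measure_pmf.expectation M (\<lambda>x. a * f x + b * g x)
       = a * measure_pmf.expectation M f + b * measure_pmf.expectation M g"
  unfolding exp_finite_sum[OF assms(1)]
  by (simp add: algebra_simps sum.distrib sum_distrib_left)

locale sdq =
  fixes P :: "'s::finite \<Rightarrow> 'a::finite \<Rightarrow> 's pmf"
    and r :: "'s \<Rightarrow> 'a \<Rightarrow> 's \<Rightarrow> real"
    and d :: "('s \<times> 'a) pmf"
    and amax :: "('a \<Rightarrow> real) \<Rightarrow> 'a"
    and \<alpha> \<gamma> :: real
  assumes alpha: "0 < \<alpha>" "\<alpha> < 1"
    and gamma: "0 < \<gamma>" "\<gamma> < 1"
    and rew: "\<And>s a s'. \<bar>r s a s'\<bar> \<le> 1"
    and d_pos: "\<And>s a. pmf d (s, a) > 0"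
    and amax: "\<And>f b. f b \<le> f (amax f)"
begin

definition EP :: "'s \<Rightarrow> 'a \<Rightarrow> ('s \<Rightarrow> real) \<Rightarrow> real" where
  "EP s a f = (\<Sum>s'\<in>UNIV. pmf (P s a) s' * f s')"

abbreviation "Qs \<equiv> Qstar P r \<gamma>"

definition mstar :: "'s \<Rightarrow> real" where "mstar s' = Qs s' (amax (Qs s'))"

definition dmin :: real where "dmin = Min (range (pmf d))"

lemma EP_lin: "EP s a (\<lambda>x. u * f x + v * g x) = u * EP s a f + v * EP s a g"
  unfolding EP_def by (simp add: algebra_simps sum.distrib sum_distrib_left)

lemma EP_diff: "EP s a (\<lambda>x. f x - g x) = EP s a f - EP s a g"
  unfolding EP_def by (simp add: algebra_simps sum_subtractf)

lemma EP_add: "EP s a (\<lambda>x. f x + g x) = EP s a f + EP s a g"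
  unfolding EP_def by (simp add: algebra_simps sum.distrib)

lemma EP_bound: "(\<And>x. \<bar>f x\<bar> \<le> B) \<Longrightarrow> \<bar>EP s a f\<bar> \<le> B"
  unfolding EP_def by (rule sum_pmf_bound)

lemma EP_const: "EP s a (\<lambda>x. c) = c"
  unfolding EP_def using pmf_sum_UNIV[of "P s a"] by (simp add: sum_distrib_right[symmetric])

lemma bellman_EP: "bellman_opt P r \<gamma> Q s a = EP s a (\<lambda>s'. r s a s' + \<gamma> * Max (range (Q s')))"
  unfolding bellman_opt_def EP_def by (rule exp_pmf_sum)

lemma bellman_contr:
  "supnorm (\<lambda>s a. bellman_opt P r \<gamma> Q1 s a - bellman_opt P r \<gamma> Q2 s a)
     \<le> \<gamma> * supnorm (\<lambda>s a. Q1 s a - Q2 s a)"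
proof (rule supnorm_le)
  fix s a
  have "bellman_opt P r \<gamma> Q1 s a - bellman_opt P r \<gamma> Q2 s a
      = EP s a (\<lambda>s'. \<gamma> * (Max (range (Q1 s')) - Max (range (Q2 s'))))"
    unfolding bellman_EP EP_diff[symmetric] by (simp add: algebra_simps)
  also have "\<bar>\<dots>\<bar> \<le> \<gamma> * supnorm (\<lambda>s a. Q1 s a - Q2 s a)"
  proof (rule EP_bound)
    fix x
    have "\<bar>Max (range (Q1 x)) - Max (range (Q2 x))\<bar> \<le> supnorm (\<lambda>s a. Q1 s a - Q2 s a)"
      by (rule Max_range_diff) (rule supnorm_ge[of "\<lambda>s a. Q1 s a - Q2 s a", simplified])
    then show "\<bar>\<gamma> * (Max (range (Q1 x)) - Max (range (Q2 x)))\<bar> \<le> \<gamma> * supnorm (\<lambda>s a. Q1 s a - Q2 s a)"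
      using gamma by (simp add: abs_mult mult_left_mono)
  qed
  finally show "\<bar>bellman_opt P r \<gamma> Q1 s a - bellman_opt P r \<gamma> Q2 s a\<bar> \<le> \<gamma> * supnorm (\<lambda>s a. Q1 s a - Q2 s a)" .
qed

lemma Qs_fix: "bellman_opt P r \<gamma> Qs = Qs"
proof -
  have "\<exists>!Q. bellman_opt P r \<gamma> Q = Q"
    by (rule contraction_fix[of \<gamma>]) (use gamma bellman_contr in auto)
  then show ?thesis unfolding Qstar_def by (rule theI')
qed

lemma Qs_eq: "Qs s a = EP s a (\<lambda>s'. r s a s' + \<gamma> * mstar s')"
proof -
  have "Qs s a = bellman_opt P r \<gamma> Qs s a" using Qs_fix by simp
  also have "\<dots> = EP s a (\<lambda>s'. r s a s' + \<gamma> * mstar s')"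
    unfolding bellman_EP mstar_def using Max_range_amax[of "Qs _" amax] amax by simp
  finally show ?thesis .
qed

lemma Qs_bound: "\<bar>Qs s a\<bar> \<le> 1 / (1 - \<gamma>)"
proof -
  have "supnorm Qs \<le> 1 + \<gamma> * supnorm Qs"
  proof (rule supnorm_le)
    fix s a
    have "\<bar>Qs s a\<bar> = \<bar>bellman_opt P r \<gamma> Qs s a\<bar>" using Qs_fix by simp
    also have "\<dots> \<le> 1 + \<gamma> * supnorm Qs"
      unfolding bellman_EP
    proof (rule EP_bound)
      fix x
      have "\<bar>Max (range (Qs x)) - Max (range (\<lambda>b::'a. 0::real))\<bar> \<le> supnorm Qs"
        by (rule Max_range_diff) (simp add: supnorm_ge)
      then have "\<bar>Max (range (Qs x))\<bar> \<le> supnorm Qs" by simp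
      then show "\<bar>r s a x + \<gamma> * Max (range (Qs x))\<bar> \<le> 1 + \<gamma> * supnorm Qs"
      proof -
        have "\<bar>r s a x + \<gamma> * Max (range (Qs x))\<bar> \<le> \<bar>r s a x\<bar> + \<bar>\<gamma> * Max (range (Qs x))\<bar>"
          by (rule abs_triangle_ineq)
        moreover have "\<bar>\<gamma> * Max (range (Qs x))\<bar> \<le> \<gamma> * supnorm Qs"
          using gamma \<open>\<bar>Max (range (Qs x))\<bar> \<le> supnorm Qs\<close> by (simp add: abs_mult mult_left_mono)
        ultimately show ?thesis using rew[of s a x] by linarith
      qed
    qed
    finally show "\<bar>Qs s a\<bar> \<le> 1 + \<gamma> * supnorm Qs" .
  qed
  then have "(1 - \<gamma>) * supnorm Qs \<le> 1" by (simp add: algebra_simps)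
  then have "supnorm Qs \<le> 1 / (1 - \<gamma>)" using gamma by (simp add: field_simps)
  then show ?thesis using supnorm_ge[of Qs s a] by linarith
qed

lemma mstar_ge: "Qs s' b \<le> mstar s'"
  unfolding mstar_def by (rule amax)

lemma dmin_pos: "0 < dmin"
proof -
  have "dmin \<in> range (pmf d)" unfolding dmin_def by (rule Min_in) auto
  then show ?thesis using d_pos by auto
qed

lemma dmin_le: "dmin \<le> pmf d c"
  unfolding dmin_def by (rule Min_le) auto

lemma d_le1: "pmf d c \<le> 1" by (rule pmf_le_1)

lemma dmin_le1: "dmin \<le> 1" using dmin_le d_le1 by (meson order_trans)

end

context sdq begin

definition ES :: "('s \<times> 'a \<times> 's \<Rightarrow> real) \<Rightarrow> real" where
  "ES f = (\<Sum>\<sigma>\<in>UNIV. pmf d \<sigma> * EP (fst \<sigma>) (snd \<sigma>) (\<lambda>s'. f (fst \<sigma>, snd \<sigma>, s')))"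

lemma ES_sample: "measure_pmf.expectation (sample_pmf d P) f = ES f"
proof -
  have "measure_pmf.expectation (sample_pmf d P) f
     = measure_pmf.expectation d (\<lambda>\<sigma>. measure_pmf.expectation ((\<lambda>(s, a). map_pmf (\<lambda>s'. (s, a, s')) (P s a)) \<sigma>) f)"
    unfolding sample_pmf_def by (rule exp_bind_finite) auto
  also have "\<dots> = measure_pmf.expectation d (\<lambda>\<sigma>. EP (fst \<sigma>) (snd \<sigma>) (\<lambda>s'. f (fst \<sigma>, snd \<sigma>, s')))"
    by (intro arg_cong[where f="measure_pmf.expectation d"] ext)
       (auto simp: EP_def exp_pmf_sum[of "P _ _"] split: prod.splits)
  also have "\<dots> = ES f" unfolding ES_def exp_pmf_sum ..
  finally show ?thesis .
qed

lemma ES_lin: "ES (\<lambda>x. u * f x + v * g x) = u * ES f + v * ES g"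
  unfolding ES_def EP_lin by (simp add: algebra_simps sum.distrib sum_distrib_left)

lemma ES_add: "ES (\<lambda>x. f x + g x) = ES f + ES g"
  using ES_lin[of 1 f 1 g] by simp

lemma ES_scale: "ES (\<lambda>x. u * f x) = u * ES f"
  using ES_lin[of u f 0 f] by simp

lemma ES_const: "ES (\<lambda>x. c) = c"
  unfolding ES_def EP_const using pmf_sum_UNIV[of d] by (simp add: sum_distrib_right[symmetric])

lemma EP_mono: "(\<And>x. f x \<le> g x) \<Longrightarrow> EP s a f \<le> EP s a g"
  unfolding EP_def by (intro sum_mono mult_left_mono) auto

lemma ES_mono: "(\<And>x. f x \<le> g x) \<Longrightarrow> ES f \<le> ES g"
  unfolding ES_def by (intro sum_mono mult_left_mono EP_mono) auto

lemma ES_sum: "ES (\<lambda>x. \<Sum>c\<in>C. f c x) = (\<Sum>c\<in>C. ES (f c))"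
proof -
  have "ES (\<lambda>x. \<Sum>c\<in>C. f c x) = (\<Sum>\<sigma>\<in>UNIV. \<Sum>s'\<in>UNIV. \<Sum>c\<in>C. pmf d \<sigma> * (pmf (P (fst \<sigma>) (snd \<sigma>)) s' * f c (fst \<sigma>, snd \<sigma>, s')))"
    unfolding ES_def EP_def by (simp add: sum_distrib_left)
  also have "\<dots> = (\<Sum>\<sigma>\<in>UNIV. \<Sum>c\<in>C. \<Sum>s'\<in>UNIV. pmf d \<sigma> * (pmf (P (fst \<sigma>) (snd \<sigma>)) s' * f c (fst \<sigma>, snd \<sigma>, s')))"
    by (intro sum.cong refl) (rule sum.swap)
  also have "\<dots> = (\<Sum>c\<in>C. \<Sum>\<sigma>\<in>UNIV. \<Sum>s'\<in>UNIV. pmf d \<sigma> * (pmf (P (fst \<sigma>) (snd \<sigma>)) s' * f c (fst \<sigma>, snd \<sigma>, s')))"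
    by (rule sum.swap)
  also have "\<dots> = (\<Sum>c\<in>C. ES (f c))"
    unfolding ES_def EP_def by (simp add: sum_distrib_left)
  finally show ?thesis .
qed

lemma EP_if: "EP s a (\<lambda>x. if C then f x else 0) = (if C then EP s a f else 0)"
  by (simp add: EP_def)

lemma ES_ind: "ES (\<lambda>x. if fst x = s \<and> fst (snd x) = a then h x else 0) = pmf d (s, a) * EP s a (\<lambda>s'. h (s, a, s'))"
proof -
  have "ES (\<lambda>x. if fst x = s \<and> fst (snd x) = a then h x else 0)
      = (\<Sum>\<sigma>\<in>UNIV. if \<sigma> = (s, a) then pmf d \<sigma> * EP (fst \<sigma>) (snd \<sigma>) (\<lambda>s'. h (fst \<sigma>, snd \<sigma>, s')) else 0)"
    unfolding ES_def
    apply (intro sum.cong refl)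
    subgoal for \<sigma> by (cases \<sigma>) (simp add: EP_if)
    done
  also have "\<dots> = pmf d (s, a) * EP s a (\<lambda>s'. h (s, a, s'))" by (simp add: sum.delta)
  finally show ?thesis .
qed

definition Fv :: "('s \<Rightarrow> 'a \<Rightarrow> real) \<Rightarrow> ('s \<Rightarrow> real) \<Rightarrow> 's \<Rightarrow> 'a \<Rightarrow> 's \<Rightarrow> real" where
  "Fv Q u s a s' = r s a s' + \<gamma> * u s' - Q s a"

definition tgt :: "('s \<Rightarrow> 'a \<Rightarrow> real) \<Rightarrow> ('s \<Rightarrow> 'a \<Rightarrow> real) \<Rightarrow> 's \<Rightarrow> real" where
  "tgt Q Q' s' = Q s' (amax (Q' s'))"

definition qupd :: "('s \<Rightarrow> 'a \<Rightarrow> real) \<Rightarrow> ('s \<Rightarrow> real) \<Rightarrow> 's \<times> 'a \<times> 's \<Rightarrow> 's \<Rightarrow> 'a \<Rightarrow> real" where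
  "qupd Q u \<xi> s1 a1 = Q s1 a1 + (if s1 = fst \<xi> \<and> a1 = fst (snd \<xi>) then \<alpha> * Fv Q u (fst \<xi>) (fst (snd \<xi>)) (snd (snd \<xi>)) else 0)"

definition Fbar :: "('s \<Rightarrow> 'a \<Rightarrow> real) \<Rightarrow> ('s \<Rightarrow> real) \<Rightarrow> 's \<Rightarrow> 'a \<Rightarrow> real" where
  "Fbar Q u s1 a1 = pmf d (s1, a1) * (EP s1 a1 (\<lambda>s'. r s1 a1 s' + \<gamma> * u s') - Q s1 a1)"

definition Xv :: "('s \<Rightarrow> 'a \<Rightarrow> real) \<Rightarrow> ('s \<Rightarrow> real) \<Rightarrow> 's \<times> 'a \<times> 's \<Rightarrow> 's \<Rightarrow> 'a \<Rightarrow> real" where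
  "Xv Q u \<xi> s1 a1 = (if s1 = fst \<xi> \<and> a1 = fst (snd \<xi>) then Fv Q u (fst \<xi>) (fst (snd \<xi>)) (snd (snd \<xi>)) else 0)"

definition zupd :: "('s \<Rightarrow> 'a \<Rightarrow> real) \<Rightarrow> ('s \<Rightarrow> 'a \<Rightarrow> real) \<Rightarrow> ('s \<Rightarrow> real) \<Rightarrow> 's \<times> 'a \<times> 's \<Rightarrow> 's \<Rightarrow> 'a \<Rightarrow> real" where
  "zupd z Q u \<xi> s1 a1 = (1 - \<alpha> * pmf d (s1, a1)) * z s1 a1 + \<alpha> * (Xv Q u \<xi> s1 a1 - Fbar Q u s1 a1)"

lemma sdq_step_eq: "sdq_step amax \<alpha> \<gamma> r (QA, QB) \<xi> = (qupd QA (tgt QA QB) \<xi>, qupd QB (tgt QB QA) \<xi>)"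
  by (cases \<xi>) (auto simp: sdq_step_def qupd_def Fv_def tgt_def fun_eq_iff)

definition ext_step where
  "ext_step st \<xi> = (case st of ((QA, QB), (zA, zB)) \<Rightarrow>
     ((qupd QA (tgt QA QB) \<xi>, qupd QB (tgt QB QA) \<xi>),
      (zupd zA QA (tgt QA QB) \<xi>, zupd zB QB (tgt QB QA) \<xi>)))"

primrec ext_dist :: "('s \<Rightarrow> 'a \<Rightarrow> real) \<Rightarrow> ('s \<Rightarrow> 'a \<Rightarrow> real) \<Rightarrow> nat
    \<Rightarrow> ((('s \<Rightarrow> 'a \<Rightarrow> real) \<times> ('s \<Rightarrow> 'a \<Rightarrow> real)) \<times> (('s \<Rightarrow> 'a \<Rightarrow> real) \<times> ('s \<Rightarrow> 'a \<Rightarrow> real))) pmf" where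
  "ext_dist QA0 QB0 0 = return_pmf ((QA0, QB0), (\<lambda>_ _. 0, \<lambda>_ _. 0))"
| "ext_dist QA0 QB0 (Suc k) = ext_dist QA0 QB0 k \<bind> (\<lambda>st. map_pmf (ext_step st) (sample_pmf d P))"

lemma fst_ext_step: "fst (ext_step st \<xi>) = sdq_step amax \<alpha> \<gamma> r (fst st) \<xi>"
  by (cases st) (auto simp: ext_step_def sdq_step_eq)

lemma ext_proj: "map_pmf fst (ext_dist QA0 QB0 k) = sdq_dist amax \<alpha> \<gamma> r d P QA0 QB0 k"
proof (induction k)
  case 0 then show ?case by simp
next
  case (Suc k)
  have "map_pmf fst (ext_dist QA0 QB0 (Suc k))
      = ext_dist QA0 QB0 k \<bind> (\<lambda>st. map_pmf (\<lambda>\<xi>. sdq_step amax \<alpha> \<gamma> r (fst st) \<xi>) (sample_pmf d P))"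
    by (simp add: map_bind_pmf map_pmf_comp fst_ext_step)
  also have "\<dots> = map_pmf fst (ext_dist QA0 QB0 k) \<bind> (\<lambda>QQ. map_pmf (sdq_step amax \<alpha> \<gamma> r QQ) (sample_pmf d P))"
    by (simp add: bind_map_pmf)
  also have "\<dots> = sdq_dist amax \<alpha> \<gamma> r d P QA0 QB0 (Suc k)" using Suc by simp
  finally show ?case .
qed

lemma ext_fin: "finite (set_pmf (ext_dist QA0 QB0 k))"
  by (induction k) auto

lemma ext_exp_Suc:
  "measure_pmf.expectation (ext_dist QA0 QB0 (Suc k)) f
   = measure_pmf.expectation (ext_dist QA0 QB0 k) (\<lambda>st. ES (\<lambda>\<xi>. f (ext_step st \<xi>)))"
proof -
  have "measure_pmf.expectation (ext_dist QA0 QB0 (Suc k)) f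
    = measure_pmf.expectation (ext_dist QA0 QB0 k) (\<lambda>st. measure_pmf.expectation (map_pmf (ext_step st) (sample_pmf d P)) f)"
    unfolding ext_dist.simps by (rule exp_bind_finite) (auto simp: ext_fin)
  also have "\<dots> = measure_pmf.expectation (ext_dist QA0 QB0 k) (\<lambda>st. ES (\<lambda>\<xi>. f (ext_step st \<xi>)))"
    by (simp add: ES_sample)
  finally show ?thesis .
qed

definition Bd :: real where "Bd = 1 / (1 - \<gamma>)"

lemma Bd_pos: "0 < Bd" unfolding Bd_def using gamma by simp

lemma Bd_eq: "1 + \<gamma> * Bd = Bd" unfolding Bd_def using gamma by (simp add: field_simps)

lemma qupd_bound:
  assumes "\<And>s a. \<bar>Q s a\<bar> \<le> Bd" "\<And>s a. \<bar>Q' s a\<bar> \<le> Bd"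
  shows "\<bar>qupd Q (tgt Q Q') \<xi> s1 a1\<bar> \<le> Bd"
proof (cases "s1 = fst \<xi> \<and> a1 = fst (snd \<xi>)")
  case True
  obtain s a s' where xi: "\<xi> = (s, a, s')" by (cases \<xi>) auto
  have e: "qupd Q (tgt Q Q') \<xi> s1 a1 = (1 - \<alpha>) * Q s a + \<alpha> * (r s a s' + \<gamma> * Q s' (amax (Q' s')))"
    using True by (simp add: xi qupd_def Fv_def tgt_def algebra_simps)
  have "\<bar>(1 - \<alpha>) * Q s a\<bar> \<le> (1 - \<alpha>) * Bd" using alpha assms(1)[of s a] by (simp add: abs_mult mult_left_mono)
  moreover have "\<bar>\<gamma> * Q s' (amax (Q' s'))\<bar> \<le> \<gamma> * Bd" using gamma assms(1) by (simp add: abs_mult mult_left_mono)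
  then have "\<bar>r s a s' + \<gamma> * Q s' (amax (Q' s'))\<bar> \<le> 1 + \<gamma> * Bd" using rew[of s a s'] by linarith
  then have "\<bar>\<alpha> * (r s a s' + \<gamma> * Q s' (amax (Q' s')))\<bar> \<le> \<alpha> * (1 + \<gamma> * Bd)" using alpha by (simp add: abs_mult mult_left_mono)
  ultimately have "\<bar>qupd Q (tgt Q Q') \<xi> s1 a1\<bar> \<le> (1 - \<alpha>) * Bd + \<alpha> * (1 + \<gamma> * Bd)" unfolding e by linarith
  then show ?thesis unfolding Bd_eq by (simp add: algebra_simps)
next
  case False
  then have "qupd Q (tgt Q Q') \<xi> s1 a1 = Q s1 a1" unfolding qupd_def by auto
  then show ?thesis using assms by simp
qed

lemma ext_bound:
  assumes "supnorm QA0 \<le> 1" "supnorm QB0 \<le> 1" "st \<in> set_pmf (ext_dist QA0 QB0 k)"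
  shows "\<bar>fst (fst st) s a\<bar> \<le> Bd \<and> \<bar>snd (fst st) s a\<bar> \<le> Bd"
  using assms(3)
proof (induction k arbitrary: st s a)
  case 0
  have "1 \<le> Bd" unfolding Bd_def using gamma by (simp add: field_simps)
  moreover from 0 have "st = ((QA0, QB0), (\<lambda>_ _. 0, \<lambda>_ _. 0))" by simp
  ultimately show ?case using supnorm_ge[of QA0 s a] supnorm_ge[of QB0 s a] assms(1,2) by simp
next
  case (Suc k)
  from Suc.prems obtain st0 where st0: "st0 \<in> set_pmf (ext_dist QA0 QB0 k)"
    and "st \<in> set_pmf (map_pmf (ext_step st0) (sample_pmf d P))" by auto
  then obtain \<xi> where st: "st = ext_step st0 \<xi>" by auto
  obtain QA QB zA zB where e: "st0 = ((QA, QB), (zA, zB))" by (cases st0) auto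
  have bA: "\<bar>QA s a\<bar> \<le> Bd" and bB: "\<bar>QB s a\<bar> \<le> Bd" for s a using Suc.IH[OF st0, of s a] e by auto
  show ?case unfolding st e ext_step_def using qupd_bound[OF bA bB] qupd_bound[OF bB bA] by simp
qed

lemma Fv_bound:
  assumes "\<And>s a. \<bar>Q s a\<bar> \<le> Bd" "\<And>s a. \<bar>Q' s a\<bar> \<le> Bd"
  shows "\<bar>Fv Q (tgt Q Q') s a s'\<bar> \<le> 2 * Bd"
proof -
  have "\<bar>\<gamma> * Q s' (amax (Q' s'))\<bar> \<le> \<gamma> * Bd" using gamma assms(1) by (simp add: abs_mult mult_left_mono)
  then have "\<bar>Fv Q (tgt Q Q') s a s'\<bar> \<le> 1 + \<gamma> * Bd + Bd"
    using rew[of s a s'] assms(1)[of s a] unfolding Fv_def tgt_def by linarith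
  then show ?thesis using Bd_eq by linarith
qed

end

context sdq begin

definition l2 :: "('s \<Rightarrow> 'a \<Rightarrow> real) \<Rightarrow> real" where
  "l2 z = (\<Sum>\<sigma>\<in>UNIV. (z (fst \<sigma>) (snd \<sigma>))\<^sup>2)"

lemma qupd_Xv: "qupd Q u \<xi> s1 a1 = Q s1 a1 + \<alpha> * Xv Q u \<xi> s1 a1"
  by (simp add: qupd_def Xv_def)

lemma ES_Xv: "ES (\<lambda>\<xi>. Xv Q u \<xi> s1 a1) = Fbar Q u s1 a1"
proof -
  have "ES (\<lambda>\<xi>. Xv Q u \<xi> s1 a1)
      = ES (\<lambda>\<xi>. if fst \<xi> = s1 \<and> fst (snd \<xi>) = a1 then Fv Q u s1 a1 (snd (snd \<xi>)) else 0)"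
    unfolding Xv_def by (intro arg_cong[where f=ES] ext) auto
  also have "\<dots> = pmf d (s1, a1) * EP s1 a1 (\<lambda>s'. Fv Q u s1 a1 s')"
    using ES_ind[of s1 a1 "\<lambda>\<xi>. Fv Q u s1 a1 (snd (snd \<xi>))"] by simp
  also have "\<dots> = Fbar Q u s1 a1"
    unfolding Fbar_def Fv_def by (simp add: EP_diff EP_const)
  finally show ?thesis .
qed

lemma ES_var:
  assumes "ES X = m"
  shows "ES (\<lambda>\<xi>. (c + \<alpha> * (X \<xi> - m))\<^sup>2) \<le> c\<^sup>2 + \<alpha>\<^sup>2 * ES (\<lambda>\<xi>. (X \<xi>)\<^sup>2)"
proof -
  have e: "(\<lambda>\<xi>. (c + \<alpha> * (X \<xi> - m))\<^sup>2)
     = (\<lambda>\<xi>. (c\<^sup>2 - 2*c*\<alpha>*m + \<alpha>\<^sup>2*m\<^sup>2) + ((2*c*\<alpha> - 2*\<alpha>\<^sup>2*m) * X \<xi> + \<alpha>\<^sup>2 * (X \<xi>)\<^sup>2))"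
    by (simp add: fun_eq_iff power2_eq_square algebra_simps)
  have "ES (\<lambda>\<xi>. (c + \<alpha> * (X \<xi> - m))\<^sup>2)
     = (c\<^sup>2 - 2*c*\<alpha>*m + \<alpha>\<^sup>2*m\<^sup>2) + ((2*c*\<alpha> - 2*\<alpha>\<^sup>2*m) * m + \<alpha>\<^sup>2 * ES (\<lambda>\<xi>. (X \<xi>)\<^sup>2))"
    unfolding e ES_add ES_const ES_scale assms ..
  also have "\<dots> = c\<^sup>2 + \<alpha>\<^sup>2 * ES (\<lambda>\<xi>. (X \<xi>)\<^sup>2) - \<alpha>\<^sup>2 * m\<^sup>2"
    by (simp add: power2_eq_square algebra_simps)
  also have "\<dots> \<le> c\<^sup>2 + \<alpha>\<^sup>2 * ES (\<lambda>\<xi>. (X \<xi>)\<^sup>2)" by simp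
  finally show ?thesis .
qed

lemma sum_Xv_sq: "(\<Sum>\<sigma>\<in>UNIV. (Xv Q u \<xi> (fst \<sigma>) (snd \<sigma>))\<^sup>2) = (Fv Q u (fst \<xi>) (fst (snd \<xi>)) (snd (snd \<xi>)))\<^sup>2"
proof -
  have "(\<Sum>\<sigma>\<in>UNIV. (Xv Q u \<xi> (fst \<sigma>) (snd \<sigma>))\<^sup>2)
     = (\<Sum>\<sigma>\<in>UNIV. if \<sigma> = (fst \<xi>, fst (snd \<xi>)) then (Fv Q u (fst \<xi>) (fst (snd \<xi>)) (snd (snd \<xi>)))\<^sup>2 else 0)"
    by (intro sum.cong refl) (auto simp: Xv_def)
  also have "\<dots> = (Fv Q u (fst \<xi>) (fst (snd \<xi>)) (snd (snd \<xi>)))\<^sup>2" by (simp add: sum.delta)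
  finally show ?thesis .
qed

lemma coef_sq: "(1 - \<alpha> * pmf d c)\<^sup>2 \<le> 1 - \<alpha> * dmin"
proof -
  have h1: "0 \<le> 1 - \<alpha> * pmf d c" using alpha d_le1[of c]
    by (smt (verit) mult_left_le mult_nonneg_nonneg pmf_nonneg)
  have h2: "1 - \<alpha> * pmf d c \<le> 1 - \<alpha> * dmin" using alpha dmin_le[of c] by (simp add: mult_left_mono)
  have h3: "1 - \<alpha> * pmf d c \<le> 1" using alpha by simp
  have "(1 - \<alpha> * pmf d c)\<^sup>2 \<le> (1 - \<alpha> * pmf d c) * 1"
    unfolding power2_eq_square by (rule mult_left_mono[OF h3 h1])
  then show ?thesis using h2 by simp
qed

lemma l2_step:
  assumes FB: "\<And>s a s'. \<bar>Fv Q u s a s'\<bar> \<le> 2 * Bd"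
  shows "ES (\<lambda>\<xi>. l2 (zupd z Q u \<xi>)) \<le> (1 - \<alpha> * dmin) * l2 z + \<alpha>\<^sup>2 * (2 * Bd)\<^sup>2"
proof -
  have "ES (\<lambda>\<xi>. l2 (zupd z Q u \<xi>)) = (\<Sum>\<sigma>\<in>UNIV. ES (\<lambda>\<xi>. (zupd z Q u \<xi> (fst \<sigma>) (snd \<sigma>))\<^sup>2))"
    unfolding l2_def by (rule ES_sum)
  also have "\<dots> \<le> (\<Sum>\<sigma>\<in>UNIV. ((1 - \<alpha> * dmin) * (z (fst \<sigma>) (snd \<sigma>))\<^sup>2
                        + \<alpha>\<^sup>2 * ES (\<lambda>\<xi>. (Xv Q u \<xi> (fst \<sigma>) (snd \<sigma>))\<^sup>2)))"
  proof (intro sum_mono)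
    fix \<sigma> :: "'s \<times> 'a"
    obtain s1 a1 where \<sigma>: "\<sigma> = (s1, a1)" by (cases \<sigma>) auto
    have "ES (\<lambda>\<xi>. (zupd z Q u \<xi> s1 a1)\<^sup>2)
        = ES (\<lambda>\<xi>. ((1 - \<alpha> * pmf d (s1, a1)) * z s1 a1 + \<alpha> * (Xv Q u \<xi> s1 a1 - Fbar Q u s1 a1))\<^sup>2)"
      unfolding zupd_def ..
    also have "\<dots> \<le> ((1 - \<alpha> * pmf d (s1, a1)) * z s1 a1)\<^sup>2 + \<alpha>\<^sup>2 * ES (\<lambda>\<xi>. (Xv Q u \<xi> s1 a1)\<^sup>2)"
      by (rule ES_var) (rule ES_Xv)
    also have "((1 - \<alpha> * pmf d (s1, a1)) * z s1 a1)\<^sup>2 \<le> (1 - \<alpha> * dmin) * (z s1 a1)\<^sup>2"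
      unfolding power_mult_distrib by (rule mult_right_mono[OF coef_sq]) simp
    finally show "ES (\<lambda>\<xi>. (zupd z Q u \<xi> (fst \<sigma>) (snd \<sigma>))\<^sup>2)
        \<le> (1 - \<alpha> * dmin) * (z (fst \<sigma>) (snd \<sigma>))\<^sup>2 + \<alpha>\<^sup>2 * ES (\<lambda>\<xi>. (Xv Q u \<xi> (fst \<sigma>) (snd \<sigma>))\<^sup>2)"
      by (simp add: \<sigma>)
  qed
  also have "\<dots> = (1 - \<alpha> * dmin) * l2 z + \<alpha>\<^sup>2 * ES (\<lambda>\<xi>. \<Sum>\<sigma>\<in>UNIV. (Xv Q u \<xi> (fst \<sigma>) (snd \<sigma>))\<^sup>2)"
    unfolding l2_def ES_sum by (simp add: sum.distrib sum_distrib_left)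
  also have "ES (\<lambda>\<xi>. \<Sum>\<sigma>\<in>UNIV. (Xv Q u \<xi> (fst \<sigma>) (snd \<sigma>))\<^sup>2) \<le> ES (\<lambda>\<xi>. (2 * Bd)\<^sup>2)"
  proof (rule ES_mono)
    fix \<xi>
    have "\<bar>Fv Q u (fst \<xi>) (fst (snd \<xi>)) (snd (snd \<xi>))\<bar> \<le> 2 * Bd" by (rule FB)
    then have "(Fv Q u (fst \<xi>) (fst (snd \<xi>)) (snd (snd \<xi>)))\<^sup>2 \<le> (2 * Bd)\<^sup>2"
      by (metis abs_ge_zero abs_le_square_iff abs_of_nonneg order_trans)
    then show "(\<Sum>\<sigma>\<in>UNIV. (Xv Q u \<xi> (fst \<sigma>) (snd \<sigma>))\<^sup>2) \<le> (2 * Bd)\<^sup>2"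
      unfolding sum_Xv_sq .
  qed
  then have "\<alpha>\<^sup>2 * ES (\<lambda>\<xi>. \<Sum>\<sigma>\<in>UNIV. (Xv Q u \<xi> (fst \<sigma>) (snd \<sigma>))\<^sup>2) \<le> \<alpha>\<^sup>2 * (2 * Bd)\<^sup>2"
    unfolding ES_const by (simp add: mult_left_mono)
  finally show ?thesis by simp
qed

definition V where "V st = l2 (fst (snd st)) + l2 (snd (snd st))"

lemma l2_nonneg: "0 \<le> l2 z" unfolding l2_def by (simp add: sum_nonneg)

lemma V_step:
  assumes "\<And>s a. \<bar>fst (fst st) s a\<bar> \<le> Bd" "\<And>s a. \<bar>snd (fst st) s a\<bar> \<le> Bd"
  shows "ES (\<lambda>\<xi>. V (ext_step st \<xi>)) \<le> (1 - \<alpha> * dmin) * V st + 2 * (\<alpha>\<^sup>2 * (2 * Bd)\<^sup>2)"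
proof -
  obtain QA QB zA zB where st: "st = ((QA, QB), (zA, zB))" by (cases st) auto
  have bA: "\<bar>QA s a\<bar> \<le> Bd" and bB: "\<bar>QB s a\<bar> \<le> Bd" for s a using assms st by auto
  have "ES (\<lambda>\<xi>. V (ext_step st \<xi>))
      = ES (\<lambda>\<xi>. l2 (zupd zA QA (tgt QA QB) \<xi>)) + ES (\<lambda>\<xi>. l2 (zupd zB QB (tgt QB QA) \<xi>))"
    unfolding st V_def ext_step_def by (simp add: ES_add)
  also have "\<dots> \<le> ((1 - \<alpha> * dmin) * l2 zA + \<alpha>\<^sup>2 * (2 * Bd)\<^sup>2) + ((1 - \<alpha> * dmin) * l2 zB + \<alpha>\<^sup>2 * (2 * Bd)\<^sup>2)"
    by (intro add_mono l2_step Fv_bound bA bB)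
  finally show ?thesis unfolding st V_def by (simp add: algebra_simps)
qed

definition Vb where "Vb = 2 * \<alpha> * (2 * Bd)\<^sup>2 / dmin"

lemma V_exp:
  assumes "supnorm QA0 \<le> 1" "supnorm QB0 \<le> 1"
  shows "measure_pmf.expectation (ext_dist QA0 QB0 k) V \<le> Vb"
proof (induction k)
  case 0
  have "0 \<le> Vb" unfolding Vb_def using alpha dmin_pos by simp
  then show ?case by (simp add: V_def l2_def)
next
  case (Suc k)
  let ?M = "ext_dist QA0 QB0 k"
  have "measure_pmf.expectation (ext_dist QA0 QB0 (Suc k)) V
      = measure_pmf.expectation ?M (\<lambda>st. ES (\<lambda>\<xi>. V (ext_step st \<xi>)))"
    by (rule ext_exp_Suc)
  also have "\<dots> \<le> measure_pmf.expectation ?M (\<lambda>st. (1 - \<alpha> * dmin) * V st + (2 * (\<alpha>\<^sup>2 * (2 * Bd)\<^sup>2)) * 1)"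
  proof (intro exp_mono_fin ext_fin)
    fix st assume "st \<in> set_pmf ?M"
    then have b: "\<And>s a. \<bar>fst (fst st) s a\<bar> \<le> Bd" "\<And>s a. \<bar>snd (fst st) s a\<bar> \<le> Bd"
      using ext_bound[OF assms] by auto
    show "ES (\<lambda>\<xi>. V (ext_step st \<xi>)) \<le> (1 - \<alpha> * dmin) * V st + 2 * (\<alpha>\<^sup>2 * (2 * Bd)\<^sup>2) * 1"
      using V_step[OF b] by simp
  qed
  also have "\<dots> = (1 - \<alpha> * dmin) * measure_pmf.expectation ?M V + (2 * (\<alpha>\<^sup>2 * (2 * Bd)\<^sup>2))"
    by (subst exp_lin_fin[OF ext_fin]) simp
  also have "\<dots> \<le> (1 - \<alpha> * dmin) * Vb + (2 * (\<alpha>\<^sup>2 * (2 * Bd)\<^sup>2))"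
  proof -
    have "0 \<le> 1 - \<alpha> * dmin" using alpha dmin_le1 by (smt (verit) mult_left_le)
    then show ?thesis using Suc by (simp add: mult_left_mono)
  qed
  also have "\<dots> = Vb" unfolding Vb_def using dmin_pos by (simp add: field_simps power2_eq_square)
  finally show ?case .
qed

end

context sdq begin

definition Zs where "Zs st = supnorm (fst (snd st)) + supnorm (snd (snd st))"

definition Zb where "Zb = 4 * Bd * sqrt (\<alpha> / dmin)"

lemma supnorm_attained: "\<exists>s a. supnorm z = \<bar>z s a\<bar>"
proof -
  have "supnorm z \<in> range (\<lambda>(s, a). \<bar>z s a\<bar>)" unfolding supnorm_def by (rule Max_in) auto
  then show ?thesis by auto
qed

lemma supnorm_sq_l2: "(supnorm z)\<^sup>2 \<le> l2 z"
proof -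
  obtain s a where e: "supnorm z = \<bar>z s a\<bar>" using supnorm_attained by blast
  have "(z (fst (s, a)) (snd (s, a)))\<^sup>2 \<le> (\<Sum>\<sigma>\<in>UNIV. (z (fst \<sigma>) (snd \<sigma>))\<^sup>2)"
    by (rule member_le_sum) auto
  then show ?thesis unfolding e l2_def by simp
qed

lemma Zs_nonneg: "0 \<le> Zs st" unfolding Zs_def by (simp add: supnorm_nonneg add_nonneg_nonneg)

lemma Zs_le: assumes "0 < t" shows "Zs st \<le> V st / t + t / 2"
proof -
  let ?a = "supnorm (fst (snd st))" and ?b = "supnorm (snd (snd st))"
  have "0 \<le> (?a - ?b)\<^sup>2" by simp
  then have "(Zs st)\<^sup>2 \<le> 2 * (?a\<^sup>2 + ?b\<^sup>2)" unfolding Zs_def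
    by (simp add: power2_eq_square algebra_simps)
  also have "\<dots> \<le> 2 * V st" unfolding V_def
    using add_mono[OF supnorm_sq_l2[of "fst (snd st)"] supnorm_sq_l2[of "snd (snd st)"]] by simp
  finally have h: "(Zs st)\<^sup>2 \<le> 2 * V st" .
  have "0 \<le> (Zs st - t)\<^sup>2" by simp
  then have "2 * t * Zs st \<le> (Zs st)\<^sup>2 + t\<^sup>2" by (simp add: power2_eq_square algebra_simps)
  also have "\<dots> \<le> 2 * V st + t\<^sup>2" using h by simp
  finally have "2 * t * Zs st \<le> 2 * V st + t\<^sup>2" .
  then show ?thesis using assms by (simp add: field_simps power2_eq_square)
qed

lemma Zb_pos: "0 < Zb" unfolding Zb_def using Bd_pos alpha dmin_pos by simp

lemma Zb_sq: "Zb\<^sup>2 = 2 * Vb"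
proof -
  have "(sqrt (\<alpha> / dmin))\<^sup>2 = \<alpha> / dmin" using alpha dmin_pos by simp
  then show ?thesis unfolding Zb_def Vb_def by (simp add: power_mult_distrib)
qed

lemma Zs_exp:
  assumes "supnorm QA0 \<le> 1" "supnorm QB0 \<le> 1"
  shows "measure_pmf.expectation (ext_dist QA0 QB0 k) Zs \<le> Zb"
proof -
  let ?M = "ext_dist QA0 QB0 k"
  have "measure_pmf.expectation ?M Zs \<le> measure_pmf.expectation ?M (\<lambda>st. (1 / Zb) * V st + (Zb / 2) * 1)"
    using Zs_le[OF Zb_pos] by (intro exp_mono_fin ext_fin) simp
  also have "\<dots> = (1 / Zb) * measure_pmf.expectation ?M V + Zb / 2"
    by (subst exp_lin_fin[OF ext_fin]) simp
  also have "\<dots> \<le> (1 / Zb) * Vb + Zb / 2"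
    using V_exp[OF assms, of k] Zb_pos by (simp add: divide_right_mono)
  also have "\<dots> = Zb" using Zb_sq Zb_pos by (simp add: field_simps power2_eq_square)
  finally show ?thesis .
qed

end

context sdq begin

definition K :: real where "K = 4 / (1 - \<gamma>)"
definition rhoK :: real where "rhoK = 1 - 3/4 * (\<alpha> * dmin) * (1 - \<gamma>)"

lemma K_pos: "0 < K" unfolding K_def using gamma by simp

lemma ad_bounds: "\<alpha> * dmin \<le> \<alpha> * pmf d c" "\<alpha> * pmf d c \<le> \<alpha>" "0 < \<alpha> * pmf d c"
  using alpha dmin_le[of c] d_le1[of c] dmin_pos dmin_le[of c]
  by (auto intro: mult_left_mono)

lemma arithA:
  fixes Y Z e y g :: real
  assumes Y: "0 \<le> Y" and Z: "0 \<le> Z" and e1: "\<alpha> * dmin \<le> e" and e2: "e \<le> \<alpha>" and e0: "0 < e"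
    and y: "\<bar>y\<bar> \<le> Y" and g: "\<bar>g\<bar> \<le> (1 + 1 / K) * Y + 2 * Z"
  shows "\<bar>(1 - e) * y + e * \<gamma> * g\<bar> \<le> rhoK * Y + \<alpha> * \<gamma> * (2 + K) * Z"
proof -
  have e3: "e < 1" using e2 alpha by simp
  have "\<bar>(1 - e) * y + e * \<gamma> * g\<bar> \<le> \<bar>(1 - e) * y\<bar> + \<bar>e * \<gamma> * g\<bar>" by (rule abs_triangle_ineq)
  also have "\<bar>(1 - e) * y\<bar> \<le> (1 - e) * Y" using e3 y by (simp add: abs_mult mult_left_mono)
  also have "\<bar>e * \<gamma> * g\<bar> \<le> (e * \<gamma>) * ((1 + 1 / K) * Y + 2 * Z)"
    using e0 gamma g by (simp add: abs_mult mult_left_mono)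
  finally have h: "\<bar>(1 - e) * y + e * \<gamma> * g\<bar> \<le> (1 - e + e * \<gamma> * (1 + 1 / K)) * Y + (2 * e * \<gamma>) * Z"
    by (simp add: algebra_simps)
  have c1: "1 - e + e * \<gamma> * (1 + 1 / K) \<le> rhoK"
  proof -
    have "rhoK - (1 - e + e * \<gamma> * (1 + 1 / K)) = (1 - \<gamma>) * ((3/4) * (e - \<alpha> * dmin) + (e / 4) * (1 - \<gamma>))"
      unfolding rhoK_def K_def using gamma by (simp add: field_simps)
    moreover have "0 \<le> (1 - \<gamma>) * ((3/4) * (e - \<alpha> * dmin) + (e / 4) * (1 - \<gamma>))"
      using gamma e0 e1 by (intro mult_nonneg_nonneg add_nonneg_nonneg) auto
    ultimately show ?thesis by linarith
  qed
  have c2: "2 * e * \<gamma> \<le> \<alpha> * \<gamma> * (2 + K)"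
  proof -
    have "2 * e * \<gamma> \<le> 2 * \<alpha> * \<gamma>" using e2 gamma by simp
    also have "\<dots> \<le> \<alpha> * \<gamma> * (2 + K)" using K_pos alpha gamma by simp
    finally show ?thesis .
  qed
  have "(1 - e + e * \<gamma> * (1 + 1 / K)) * Y \<le> rhoK * Y" using c1 Y by (rule mult_right_mono)
  moreover have "(2 * e * \<gamma>) * Z \<le> (\<alpha> * \<gamma> * (2 + K)) * Z" using c2 Z by (rule mult_right_mono)
  ultimately show ?thesis using h by linarith
qed

lemma arithD:
  fixes Y Z e y g :: real
  assumes Y: "0 \<le> Y" and Z: "0 \<le> Z" and e1: "\<alpha> * dmin \<le> e" and e2: "e \<le> \<alpha>" and e0: "0 < e"
    and y: "K * \<bar>y\<bar> \<le> Y" and g: "\<bar>g\<bar> \<le> Y / K + Z"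
  shows "K * \<bar>(1 - e) * y + e * \<gamma> * g\<bar> \<le> rhoK * Y + \<alpha> * \<gamma> * (2 + K) * Z"
proof -
  have e3: "e < 1" using e2 alpha by simp
  have "K * \<bar>(1 - e) * y + e * \<gamma> * g\<bar> \<le> K * (\<bar>(1 - e) * y\<bar> + \<bar>e * \<gamma> * g\<bar>)"
    using K_pos by (intro mult_left_mono abs_triangle_ineq) auto
  also have "\<dots> = (1 - e) * (K * \<bar>y\<bar>) + (e * \<gamma>) * (K * \<bar>g\<bar>)"
  proof -
    have "\<bar>(1 - e) * y\<bar> = (1 - e) * \<bar>y\<bar>" using e3 by (simp add: abs_mult)
    moreover have "\<bar>e * \<gamma> * g\<bar> = (e * \<gamma>) * \<bar>g\<bar>" using e0 gamma by (simp add: abs_mult)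
    ultimately show ?thesis by (simp only:) (simp add: algebra_simps)
  qed
  also have "\<dots> \<le> (1 - e) * Y + (e * \<gamma>) * (Y + K * Z)"
  proof (intro add_mono mult_left_mono)
    show "K * \<bar>g\<bar> \<le> Y + K * Z" using g K_pos by (simp add: field_simps)
  qed (use y e3 e0 gamma in auto)
  finally have h: "K * \<bar>(1 - e) * y + e * \<gamma> * g\<bar> \<le> (1 - e * (1 - \<gamma>)) * Y + (e * \<gamma> * K) * Z"
    by (simp add: algebra_simps)
  have c1: "1 - e * (1 - \<gamma>) \<le> rhoK"
  proof -
    have "rhoK - (1 - e * (1 - \<gamma>)) = (1 - \<gamma>) * ((3/4) * (e - \<alpha> * dmin) + e / 4)"
      unfolding rhoK_def using gamma by (simp add: field_simps)
    moreover have "0 \<le> (1 - \<gamma>) * ((3/4) * (e - \<alpha> * dmin) + e / 4)"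
      using gamma e0 e1 by (intro mult_nonneg_nonneg add_nonneg_nonneg) auto
    ultimately show ?thesis by linarith
  qed
  have c2: "e * \<gamma> * K \<le> \<alpha> * \<gamma> * (2 + K)"
  proof -
    have "e * \<gamma> * K \<le> \<alpha> * \<gamma> * K" using e2 gamma K_pos by simp
    also have "\<dots> \<le> \<alpha> * \<gamma> * (2 + K)" using K_pos alpha gamma by simp
    finally show ?thesis .
  qed
  have "(1 - e * (1 - \<gamma>)) * Y \<le> rhoK * Y" using c1 Y by (rule mult_right_mono)
  moreover have "(e * \<gamma> * K) * Z \<le> (\<alpha> * \<gamma> * (2 + K)) * Z" using c2 Z by (rule mult_right_mono)
  ultimately show ?thesis using h by linarith
qed

end

context sdq begin

definition yv :: "('s \<Rightarrow> 'a \<Rightarrow> real) \<Rightarrow> ('s \<Rightarrow> 'a \<Rightarrow> real) \<Rightarrow> 's \<Rightarrow> 'a \<Rightarrow> real" where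
  "yv Q z s a = Q s a - Qs s a - z s a"

lemma y_step:
  "yv (qupd Q u \<xi>) (zupd z Q u \<xi>) s1 a1
   = (1 - \<alpha> * pmf d (s1, a1)) * yv Q z s1 a1 + \<alpha> * pmf d (s1, a1) * \<gamma> * EP s1 a1 (\<lambda>s'. u s' - mstar s')"
proof -
  have e1: "EP s1 a1 (\<lambda>s'. r s1 a1 s' + \<gamma> * u s') = EP s1 a1 (r s1 a1) + \<gamma> * EP s1 a1 u"
    using EP_lin[of s1 a1 1 "r s1 a1" \<gamma> u] by simp
  have e2: "EP s1 a1 (\<lambda>s'. r s1 a1 s' + \<gamma> * mstar s') = EP s1 a1 (r s1 a1) + \<gamma> * EP s1 a1 mstar"
    using EP_lin[of s1 a1 1 "r s1 a1" \<gamma> mstar] by simp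
  have e3: "EP s1 a1 (\<lambda>s'. u s' - mstar s') = EP s1 a1 u - EP s1 a1 mstar" by (rule EP_diff)
  show ?thesis
    unfolding yv_def qupd_Xv zupd_def Fbar_def Qs_eq[of s1 a1] e1 e2 e3
    by (simp add: algebra_simps)
qed

lemma tgt_star:
  "\<bar>tgt QA QB s' - mstar s'\<bar>
   \<le> max (supnorm (\<lambda>s a. QA s a - Qs s a)) (supnorm (\<lambda>s a. QB s a - Qs s a)) + supnorm (\<lambda>s a. QA s a - QB s a)"
proof -
  let ?bB = "amax (QB s')" and ?bs = "amax (Qs s')"
  have u1: "QA s' ?bB - Qs s' ?bB \<le> supnorm (\<lambda>s a. QA s a - Qs s a)"
    using supnorm_ge[of "\<lambda>s a. QA s a - Qs s a" s' ?bB] by simp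
  have u2: "Qs s' ?bB \<le> mstar s'" by (rule mstar_ge)
  have l1: "QB s' ?bs \<le> QB s' ?bB" by (rule amax)
  have l2: "QB s' ?bB - QA s' ?bB \<le> supnorm (\<lambda>s a. QA s a - QB s a)"
    using supnorm_ge[of "\<lambda>s a. QA s a - QB s a" s' ?bB] by simp
  have l3: "Qs s' ?bs - QB s' ?bs \<le> supnorm (\<lambda>s a. QB s a - Qs s a)"
    using supnorm_ge[of "\<lambda>s a. QB s a - Qs s a" s' ?bs] by simp
  have m: "mstar s' = Qs s' ?bs" unfolding mstar_def ..
  have n: "0 \<le> supnorm (\<lambda>s a. QA s a - QB s a)" by (rule supnorm_nonneg)
  show ?thesis unfolding tgt_def using u1 u2 l1 l2 l3 m n by (simp add: abs_le_iff) linarith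
qed

lemma tgt_diff:
  "\<bar>tgt QA QB s' - tgt QB QA s'\<bar> \<le> supnorm (\<lambda>s a. QA s a - QB s a)"
proof -
  let ?bB = "amax (QB s')" and ?bA = "amax (QA s')"
  have "QA s' ?bB \<le> QA s' ?bA" "QB s' ?bA \<le> QB s' ?bB" by (rule amax)+
  moreover have "\<bar>QA s' ?bA - QB s' ?bA\<bar> \<le> supnorm (\<lambda>s a. QA s a - QB s a)"
    "\<bar>QA s' ?bB - QB s' ?bB\<bar> \<le> supnorm (\<lambda>s a. QA s a - QB s a)"
    using supnorm_ge[of "\<lambda>s a. QA s a - QB s a"] by auto
  ultimately show ?thesis unfolding tgt_def by (auto simp: abs_le_iff)
qed

definition Yf where
  "Yf st = max (max (supnorm (yv (fst (fst st)) (fst (snd st)))) (supnorm (yv (snd (fst st)) (snd (snd st)))))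
                (K * supnorm (\<lambda>s a. yv (fst (fst st)) (fst (snd st)) s a - yv (snd (fst st)) (snd (snd st)) s a))"

lemma Yf_nonneg: "0 \<le> Yf st" unfolding Yf_def by (simp add: le_max_iff_disj supnorm_nonneg)

lemma Y_step: "Yf (ext_step st \<xi>) \<le> rhoK * Yf st + \<alpha> * \<gamma> * (2 + K) * Zs st"
proof -
  obtain QA QB zA zB where st: "st = ((QA, QB), (zA, zB))" by (cases st) auto
  define Y where "Y = Yf st"
  define Z where "Z = Zs st"
  define uA where "uA = tgt QA QB"
  define uB where "uB = tgt QB QA"
  have Y0: "0 \<le> Y" unfolding Y_def by (rule Yf_nonneg)
  have Z0: "0 \<le> Z" unfolding Z_def by (rule Zs_nonneg)
  have yA: "\<bar>yv QA zA s a\<bar> \<le> Y" for s a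
    using supnorm_ge[of "yv QA zA" s a] unfolding Y_def Yf_def st by (simp add: le_max_iff_disj)
  have yB: "\<bar>yv QB zB s a\<bar> \<le> Y" for s a
    using supnorm_ge[of "yv QB zB" s a] unfolding Y_def Yf_def st by (simp add: le_max_iff_disj)
  have yD: "K * \<bar>yv QA zA s a - yv QB zB s a\<bar> \<le> Y" for s a
    using supnorm_ge[of "\<lambda>s a. yv QA zA s a - yv QB zB s a" s a] K_pos
    unfolding Y_def Yf_def st by (simp add: le_max_iff_disj mult_left_mono)
  have zA: "\<bar>zA s a\<bar> \<le> supnorm zA" and zB: "\<bar>zB s a\<bar> \<le> supnorm zB" for s a
    by (rule supnorm_ge)+
  have Zdef: "Z = supnorm zA + supnorm zB" unfolding Z_def Zs_def st by simp
  have nA: "supnorm (\<lambda>s a. QA s a - Qs s a) \<le> Y + Z"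
  proof (rule supnorm_le)
    fix s a
    have "QA s a - Qs s a = yv QA zA s a + zA s a" unfolding yv_def by simp
    then show "\<bar>QA s a - Qs s a\<bar> \<le> Y + Z" using yA[of s a] zA[of s a] supnorm_nonneg[of zB] Zdef by linarith
  qed
  have nB: "supnorm (\<lambda>s a. QB s a - Qs s a) \<le> Y + Z"
  proof (rule supnorm_le)
    fix s a
    have "QB s a - Qs s a = yv QB zB s a + zB s a" unfolding yv_def by simp
    then show "\<bar>QB s a - Qs s a\<bar> \<le> Y + Z" using yB[of s a] zB[of s a] supnorm_nonneg[of zA] Zdef by linarith
  qed
  have nD: "supnorm (\<lambda>s a. QA s a - QB s a) \<le> Y / K + Z"
  proof (rule supnorm_le)
    fix s a
    have "QA s a - QB s a = (yv QA zA s a - yv QB zB s a) + zA s a - zB s a" unfolding yv_def by simp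
    moreover have "\<bar>yv QA zA s a - yv QB zB s a\<bar> \<le> Y / K" using yD[of s a] K_pos by (simp add: field_simps)
    ultimately show "\<bar>QA s a - QB s a\<bar> \<le> Y / K + Z" using zA[of s a] zB[of s a] Zdef by linarith
  qed
  have gA: "\<bar>EP s a (\<lambda>s'. uA s' - mstar s')\<bar> \<le> (1 + 1 / K) * Y + 2 * Z" for s a
  proof (rule EP_bound)
    fix s'
    have "max (supnorm (\<lambda>s a. QA s a - Qs s a)) (supnorm (\<lambda>s a. QB s a - Qs s a)) \<le> Y + Z"
      using nA nB by simp
    then have "\<bar>uA s' - mstar s'\<bar> \<le> (Y + Z) + (Y / K + Z)"
      using tgt_star[of QA QB s'] nD unfolding uA_def by linarith
    then show "\<bar>uA s' - mstar s'\<bar> \<le> (1 + 1 / K) * Y + 2 * Z" by (simp add: algebra_simps)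
  qed
  have gB: "\<bar>EP s a (\<lambda>s'. uB s' - mstar s')\<bar> \<le> (1 + 1 / K) * Y + 2 * Z" for s a
  proof (rule EP_bound)
    fix s'
    have nD': "supnorm (\<lambda>s a. QB s a - QA s a) \<le> Y / K + Z"
    proof (rule supnorm_le)
      fix s a show "\<bar>QB s a - QA s a\<bar> \<le> Y / K + Z"
        using supnorm_ge[of "\<lambda>s a. QA s a - QB s a" s a] nD by simp
    qed
    have "max (supnorm (\<lambda>s a. QB s a - Qs s a)) (supnorm (\<lambda>s a. QA s a - Qs s a)) \<le> Y + Z"
      using nA nB by simp
    then have "\<bar>uB s' - mstar s'\<bar> \<le> (Y + Z) + (Y / K + Z)"
      using tgt_star[of QB QA s'] nD' unfolding uB_def by linarith
    then show "\<bar>uB s' - mstar s'\<bar> \<le> (1 + 1 / K) * Y + 2 * Z" by (simp add: algebra_simps)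
  qed
  have gD: "\<bar>EP s a (\<lambda>s'. uA s' - mstar s') - EP s a (\<lambda>s'. uB s' - mstar s')\<bar> \<le> Y / K + Z" for s a
  proof -
    have "EP s a (\<lambda>s'. uA s' - mstar s') - EP s a (\<lambda>s'. uB s' - mstar s') = EP s a (\<lambda>s'. uA s' - uB s')"
      by (simp add: EP_diff)
    also have "\<bar>\<dots>\<bar> \<le> Y / K + Z"
    proof (rule EP_bound)
      fix s' show "\<bar>uA s' - uB s'\<bar> \<le> Y / K + Z" using tgt_diff[of QA QB s'] nD unfolding uA_def uB_def by simp
    qed
    finally show ?thesis .
  qed
  have es: "ext_step st \<xi> = ((qupd QA uA \<xi>, qupd QB uB \<xi>), (zupd zA QA uA \<xi>, zupd zB QB uB \<xi>))"
    unfolding st ext_step_def uA_def uB_def by simp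
  let ?R = "rhoK * Y + \<alpha> * \<gamma> * (2 + K) * Z"
  have cA: "\<bar>yv (qupd QA uA \<xi>) (zupd zA QA uA \<xi>) s a\<bar> \<le> ?R" for s a
    unfolding y_step using ad_bounds[of "(s, a)"]
    by (intro arithA[OF Y0 Z0] yA gA) (auto simp: mult.assoc)
  have cB: "\<bar>yv (qupd QB uB \<xi>) (zupd zB QB uB \<xi>) s a\<bar> \<le> ?R" for s a
    unfolding y_step using ad_bounds[of "(s, a)"]
    by (intro arithA[OF Y0 Z0] yB gB) (auto simp: mult.assoc)
  have cD: "K * \<bar>yv (qupd QA uA \<xi>) (zupd zA QA uA \<xi>) s a - yv (qupd QB uB \<xi>) (zupd zB QB uB \<xi>) s a\<bar> \<le> ?R" for s a
  proof -
    let ?e = "\<alpha> * pmf d (s, a)"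
    have "yv (qupd QA uA \<xi>) (zupd zA QA uA \<xi>) s a - yv (qupd QB uB \<xi>) (zupd zB QB uB \<xi>) s a
        = (1 - ?e) * (yv QA zA s a - yv QB zB s a)
          + ?e * \<gamma> * (EP s a (\<lambda>s'. uA s' - mstar s') - EP s a (\<lambda>s'. uB s' - mstar s'))"
      unfolding y_step by (simp add: algebra_simps)
    also have "K * \<bar>\<dots>\<bar> \<le> ?R"
      using ad_bounds[of "(s, a)"] by (intro arithD[OF Y0 Z0] yD gD) auto
    finally show ?thesis .
  qed
  have R1: "supnorm (yv (qupd QA uA \<xi>) (zupd zA QA uA \<xi>)) \<le> ?R" by (rule supnorm_le) (rule cA)
  have R2: "supnorm (yv (qupd QB uB \<xi>) (zupd zB QB uB \<xi>)) \<le> ?R" by (rule supnorm_le) (rule cB)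
  have R3: "K * supnorm (\<lambda>s a. yv (qupd QA uA \<xi>) (zupd zA QA uA \<xi>) s a - yv (qupd QB uB \<xi>) (zupd zB QB uB \<xi>) s a) \<le> ?R"
  proof -
    have "supnorm (\<lambda>s a. yv (qupd QA uA \<xi>) (zupd zA QA uA \<xi>) s a - yv (qupd QB uB \<xi>) (zupd zB QB uB \<xi>) s a) \<le> ?R / K"
      by (rule supnorm_le) (use cD K_pos in \<open>simp add: field_simps\<close>)
    then show ?thesis using K_pos by (simp add: field_simps)
  qed
  have "Yf (ext_step st \<xi>) = max (max (supnorm (yv (qupd QA uA \<xi>) (zupd zA QA uA \<xi>))) (supnorm (yv (qupd QB uB \<xi>) (zupd zB QB uB \<xi>))))
     (K * supnorm (\<lambda>s a. yv (qupd QA uA \<xi>) (zupd zA QA uA \<xi>) s a - yv (qupd QB uB \<xi>) (zupd zB QB uB \<xi>) s a))"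
    unfolding es Yf_def by simp
  then have "Yf (ext_step st \<xi>) \<le> ?R" using R1 R2 R3 by simp
  then show ?thesis by (simp add: Y_def Z_def)
qed

end

context sdq begin

definition st0 where "st0 QA0 QB0 = ((QA0, QB0), (\<lambda>(_::'s) (_::'a). 0::real, \<lambda>(_::'s) (_::'a). 0::real))"

lemma rhoK_bounds: "0 < rhoK" "rhoK < 1" "1 - rhoK = 3/4 * (\<alpha> * dmin) * (1 - \<gamma>)"
proof -
  have a: "0 < \<alpha> * dmin" using alpha dmin_pos by simp
  have b: "\<alpha> * dmin \<le> 1" using alpha dmin_le1 dmin_pos by (simp add: mult_le_one)
  have c: "(\<alpha> * dmin) * (1 - \<gamma>) \<le> 1" using b gamma a by (simp add: mult_le_one)
  have "0 < (\<alpha> * dmin) * (1 - \<gamma>)" using a gamma by simp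
  then show "0 < rhoK" "rhoK < 1" "1 - rhoK = 3/4 * (\<alpha> * dmin) * (1 - \<gamma>)"
    unfolding rhoK_def using c by auto
qed

definition cZ where "cZ = \<alpha> * \<gamma> * (2 + K)"

lemma cZ_nonneg: "0 \<le> cZ" unfolding cZ_def using alpha gamma K_pos by simp

lemma Y_exp:
  assumes "supnorm QA0 \<le> 1" "supnorm QB0 \<le> 1"
  shows "measure_pmf.expectation (ext_dist QA0 QB0 k) Yf \<le> rhoK ^ k * Yf (st0 QA0 QB0) + cZ * Zb / (1 - rhoK)"
proof (induction k)
  case 0
  have "0 \<le> cZ * Zb / (1 - rhoK)" using cZ_nonneg Zb_pos rhoK_bounds by simp
  then show ?case by (simp add: st0_def)
next
  case (Suc k)
  let ?M = "ext_dist QA0 QB0 k"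
  have "measure_pmf.expectation (ext_dist QA0 QB0 (Suc k)) Yf
      = measure_pmf.expectation ?M (\<lambda>st. ES (\<lambda>\<xi>. Yf (ext_step st \<xi>)))"
    by (rule ext_exp_Suc)
  also have "\<dots> \<le> measure_pmf.expectation ?M (\<lambda>st. rhoK * Yf st + cZ * Zs st)"
  proof (intro exp_mono_fin ext_fin)
    fix st
    have "ES (\<lambda>\<xi>. Yf (ext_step st \<xi>)) \<le> ES (\<lambda>\<xi>. rhoK * Yf st + cZ * Zs st)"
      by (rule ES_mono) (simp add: Y_step cZ_def)
    then show "ES (\<lambda>\<xi>. Yf (ext_step st \<xi>)) \<le> rhoK * Yf st + cZ * Zs st" by (simp add: ES_const)
  qed
  also have "\<dots> = rhoK * measure_pmf.expectation ?M Yf + cZ * measure_pmf.expectation ?M Zs"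
    by (rule exp_lin_fin[OF ext_fin])
  also have "\<dots> \<le> rhoK * (rhoK ^ k * Yf (st0 QA0 QB0) + cZ * Zb / (1 - rhoK)) + cZ * Zb"
  proof (rule add_mono)
    show "rhoK * measure_pmf.expectation ?M Yf \<le> rhoK * (rhoK ^ k * Yf (st0 QA0 QB0) + cZ * Zb / (1 - rhoK))"
      by (rule mult_left_mono[OF Suc]) (use rhoK_bounds(1) in simp)
    show "cZ * measure_pmf.expectation ?M Zs \<le> cZ * Zb"
      by (rule mult_left_mono[OF Zs_exp[OF assms] cZ_nonneg])
  qed
  also have "\<dots> = rhoK ^ Suc k * Yf (st0 QA0 QB0) + cZ * Zb / (1 - rhoK)"
    using rhoK_bounds by (simp add: field_simps)
  finally show ?case .
qed

lemma Y0_bound: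
  assumes "supnorm QA0 \<le> 1" "supnorm QB0 \<le> 1"
  shows "Yf (st0 QA0 QB0) \<le> 8 * Bd"
proof -
  have B1: "1 \<le> Bd" unfolding Bd_def using gamma by (simp add: field_simps)
  have a: "supnorm (yv Q (\<lambda>_ _. 0)) \<le> 8 * Bd" if "supnorm Q \<le> 1" for Q
  proof (rule supnorm_le)
    fix s a
    have "\<bar>yv Q (\<lambda>_ _. 0) s a\<bar> \<le> \<bar>Q s a\<bar> + \<bar>Qs s a\<bar>" unfolding yv_def by simp
    then show "\<bar>yv Q (\<lambda>_ _. 0) s a\<bar> \<le> 8 * Bd"
      using supnorm_ge[of Q s a] that Qs_bound[of s a] B1 unfolding Bd_def[symmetric] by linarith
  qed
  have "supnorm (\<lambda>s a. yv QA0 (\<lambda>_ _. 0) s a - yv QB0 (\<lambda>_ _. 0) s a) \<le> 2"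
  proof (rule supnorm_le)
    fix s a
    show "\<bar>yv QA0 (\<lambda>_ _. 0) s a - yv QB0 (\<lambda>_ _. 0) s a\<bar> \<le> 2"
      using supnorm_ge[of QA0 s a] supnorm_ge[of QB0 s a] assms unfolding yv_def by linarith
  qed
  then have "K * supnorm (\<lambda>s a. yv QA0 (\<lambda>_ _. 0) s a - yv QB0 (\<lambda>_ _. 0) s a) \<le> K * 2"
    using K_pos by (simp add: mult_left_mono)
  also have "K * 2 = 8 * Bd" unfolding K_def Bd_def by simp
  finally show ?thesis unfolding st0_def Yf_def using a[OF assms(1)] a[OF assms(2)] by simp
qed

lemma main_bound:
  assumes init: "supnorm QA0 \<le> 1" "supnorm QB0 \<le> 1"
  shows "measure_pmf.expectation (sdq_dist amax \<alpha> \<gamma> r d P QA0 QB0 k)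
           (\<lambda>(QA, QB). supnorm (\<lambda>s a. QA s a - Qs s a)) \<le> rhoK ^ k * (8 * Bd) + cZ * Zb / (1 - rhoK) + Zb"
    and "measure_pmf.expectation (sdq_dist amax \<alpha> \<gamma> r d P QA0 QB0 k)
           (\<lambda>(QA, QB). supnorm (\<lambda>s a. QB s a - Qs s a)) \<le> rhoK ^ k * (8 * Bd) + cZ * Zb / (1 - rhoK) + Zb"
proof -
  let ?M = "ext_dist QA0 QB0 k"
  have YE: "1 * measure_pmf.expectation ?M Yf + 1 * measure_pmf.expectation ?M Zs \<le> rhoK ^ k * (8 * Bd) + cZ * Zb / (1 - rhoK) + Zb"
  proof -
    have "rhoK ^ k * Yf (st0 QA0 QB0) \<le> rhoK ^ k * (8 * Bd)"
      using Y0_bound[OF init] rhoK_bounds by (intro mult_left_mono) auto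
    then show ?thesis using Y_exp[OF init, of k] Zs_exp[OF init, of k] by simp
  qed
  have pA: "supnorm (\<lambda>s a. fst (fst st) s a - Qs s a) \<le> 1 * Yf st + 1 * Zs st" for st
  proof (rule supnorm_le)
    fix s a
    have "\<bar>yv (fst (fst st)) (fst (snd st)) s a\<bar> \<le> Yf st"
      using supnorm_ge[of "yv (fst (fst st)) (fst (snd st))" s a] unfolding Yf_def by (simp add: le_max_iff_disj)
    moreover have "\<bar>fst (snd st) s a\<bar> \<le> supnorm (fst (snd st))" by (rule supnorm_ge)
    moreover have "0 \<le> supnorm (snd (snd st))" by (rule supnorm_nonneg)
    moreover have "\<bar>fst (fst st) s a - Qs s a\<bar> \<le> \<bar>yv (fst (fst st)) (fst (snd st)) s a\<bar> + \<bar>fst (snd st) s a\<bar>"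
    proof -
      have "fst (fst st) s a - Qs s a = yv (fst (fst st)) (fst (snd st)) s a + fst (snd st) s a"
        unfolding yv_def by simp
      then show ?thesis by (metis abs_triangle_ineq)
    qed
    ultimately have "\<bar>fst (fst st) s a - Qs s a\<bar> \<le> Yf st + supnorm (fst (snd st)) + supnorm (snd (snd st))"
      by linarith
    then show "\<bar>fst (fst st) s a - Qs s a\<bar> \<le> 1 * Yf st + 1 * Zs st"
      unfolding Zs_def by simp
  qed
  have pB: "supnorm (\<lambda>s a. snd (fst st) s a - Qs s a) \<le> 1 * Yf st + 1 * Zs st" for st
  proof (rule supnorm_le)
    fix s a
    have "\<bar>yv (snd (fst st)) (snd (snd st)) s a\<bar> \<le> Yf st"
      using supnorm_ge[of "yv (snd (fst st)) (snd (snd st))" s a] unfolding Yf_def by (simp add: le_max_iff_disj)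
    moreover have "\<bar>snd (snd st) s a\<bar> \<le> supnorm (snd (snd st))" by (rule supnorm_ge)
    moreover have "0 \<le> supnorm (fst (snd st))" by (rule supnorm_nonneg)
    moreover have "\<bar>snd (fst st) s a - Qs s a\<bar> \<le> \<bar>yv (snd (fst st)) (snd (snd st)) s a\<bar> + \<bar>snd (snd st) s a\<bar>"
    proof -
      have "snd (fst st) s a - Qs s a = yv (snd (fst st)) (snd (snd st)) s a + snd (snd st) s a"
        unfolding yv_def by simp
      then show ?thesis by (metis abs_triangle_ineq)
    qed
    ultimately have "\<bar>snd (fst st) s a - Qs s a\<bar> \<le> Yf st + supnorm (snd (snd st)) + supnorm (fst (snd st))"
      by linarith
    then show "\<bar>snd (fst st) s a - Qs s a\<bar> \<le> 1 * Yf st + 1 * Zs st"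
      unfolding Zs_def by simp
  qed
  have eq: "measure_pmf.expectation (sdq_dist amax \<alpha> \<gamma> r d P QA0 QB0 k) f
          = measure_pmf.expectation ?M (\<lambda>st. f (fst st))" for f :: "_ \<Rightarrow> real"
    unfolding ext_proj[symmetric] by simp
  show "measure_pmf.expectation (sdq_dist amax \<alpha> \<gamma> r d P QA0 QB0 k)
           (\<lambda>(QA, QB). supnorm (\<lambda>s a. QA s a - Qs s a)) \<le> rhoK ^ k * (8 * Bd) + cZ * Zb / (1 - rhoK) + Zb"
  proof -
    have "measure_pmf.expectation ?M (\<lambda>st. (\<lambda>(QA, QB). supnorm (\<lambda>s a. QA s a - Qs s a)) (fst st))
        \<le> measure_pmf.expectation ?M (\<lambda>st. 1 * Yf st + 1 * Zs st)"
      by (intro exp_mono_fin ext_fin) (simp add: case_prod_beta pA[simplified])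
    also have "\<dots> = 1 * measure_pmf.expectation ?M Yf + 1 * measure_pmf.expectation ?M Zs"
      by (rule exp_lin_fin[OF ext_fin])
    finally show ?thesis unfolding eq using YE by linarith
  qed
  show "measure_pmf.expectation (sdq_dist amax \<alpha> \<gamma> r d P QA0 QB0 k)
           (\<lambda>(QA, QB). supnorm (\<lambda>s a. QB s a - Qs s a)) \<le> rhoK ^ k * (8 * Bd) + cZ * Zb / (1 - rhoK) + Zb"
  proof -
    have "measure_pmf.expectation ?M (\<lambda>st. (\<lambda>(QA, QB). supnorm (\<lambda>s a. QB s a - Qs s a)) (fst st))
        \<le> measure_pmf.expectation ?M (\<lambda>st. 1 * Yf st + 1 * Zs st)"
      by (intro exp_mono_fin ext_fin) (simp add: case_prod_beta pB[simplified])
    also have "\<dots> = 1 * measure_pmf.expectation ?M Yf + 1 * measure_pmf.expectation ?M Zs"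
      by (rule exp_lin_fin[OF ext_fin])
    finally show ?thesis unfolding eq using YE by linarith
  qed
qed

lemma trivial_bound:
  assumes init: "supnorm QA0 \<le> 1" "supnorm QB0 \<le> 1"
  shows "measure_pmf.expectation (sdq_dist amax \<alpha> \<gamma> r d P QA0 QB0 k)
           (\<lambda>(QA, QB). supnorm (\<lambda>s a. QA s a - Qs s a)) \<le> 2 * Bd"
    and "measure_pmf.expectation (sdq_dist amax \<alpha> \<gamma> r d P QA0 QB0 k)
           (\<lambda>(QA, QB). supnorm (\<lambda>s a. QB s a - Qs s a)) \<le> 2 * Bd"
proof -
  let ?M = "ext_dist QA0 QB0 k"
  have eq: "measure_pmf.expectation (sdq_dist amax \<alpha> \<gamma> r d P QA0 QB0 k) f
          = measure_pmf.expectation ?M (\<lambda>st. f (fst st))" for f :: "_ \<Rightarrow> real"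
    unfolding ext_proj[symmetric] by simp
  have c: "measure_pmf.expectation ?M (\<lambda>st. 0 * Yf st + (2 * Bd) * 1) = 2 * Bd"
    by (subst exp_lin_fin[OF ext_fin]) simp
  have q: "\<bar>Qs s a\<bar> \<le> Bd" for s a using Qs_bound unfolding Bd_def .
  have pA: "supnorm (\<lambda>s a. fst (fst st) s a - Qs s a) \<le> 0 * Yf st + (2 * Bd) * 1"
    and pB: "supnorm (\<lambda>s a. snd (fst st) s a - Qs s a) \<le> 0 * Yf st + (2 * Bd) * 1"
    if "st \<in> set_pmf ?M" for st
  proof -
    have b: "\<bar>fst (fst st) s a\<bar> \<le> Bd" "\<bar>snd (fst st) s a\<bar> \<le> Bd" for s a
      using ext_bound[OF init that] by auto
    have "supnorm (\<lambda>s a. fst (fst st) s a - Qs s a) \<le> 2 * Bd"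
    proof (rule supnorm_le)
      fix s a
      have "\<bar>fst (fst st) s a - Qs s a\<bar> \<le> \<bar>fst (fst st) s a\<bar> + \<bar>Qs s a\<bar>" by (rule abs_triangle_ineq4)
      then show "\<bar>fst (fst st) s a - Qs s a\<bar> \<le> 2 * Bd" using b(1)[of s a] q[of s a] by linarith
    qed
    then show "supnorm (\<lambda>s a. fst (fst st) s a - Qs s a) \<le> 0 * Yf st + (2 * Bd) * 1" by simp
    have "supnorm (\<lambda>s a. snd (fst st) s a - Qs s a) \<le> 2 * Bd"
    proof (rule supnorm_le)
      fix s a
      have "\<bar>snd (fst st) s a - Qs s a\<bar> \<le> \<bar>snd (fst st) s a\<bar> + \<bar>Qs s a\<bar>" by (rule abs_triangle_ineq4)
      then show "\<bar>snd (fst st) s a - Qs s a\<bar> \<le> 2 * Bd" using b(2)[of s a] q[of s a] by linarith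
    qed
    then show "supnorm (\<lambda>s a. snd (fst st) s a - Qs s a) \<le> 0 * Yf st + (2 * Bd) * 1" by simp
  qed
  have "measure_pmf.expectation ?M (\<lambda>st. (\<lambda>(QA, QB). supnorm (\<lambda>s a. QA s a - Qs s a)) (fst st))
      \<le> measure_pmf.expectation ?M (\<lambda>st. 0 * Yf st + (2 * Bd) * 1)"
  proof (intro exp_mono_fin ext_fin)
    fix st assume "st \<in> set_pmf ?M"
    from pA[OF this] show "(\<lambda>(QA, QB). supnorm (\<lambda>s a. QA s a - Qs s a)) (fst st) \<le> 0 * Yf st + (2 * Bd) * 1"
      by (simp add: case_prod_beta)
  qed
  then show "measure_pmf.expectation (sdq_dist amax \<alpha> \<gamma> r d P QA0 QB0 k)
           (\<lambda>(QA, QB). supnorm (\<lambda>s a. QA s a - Qs s a)) \<le> 2 * Bd"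
    unfolding eq c .
  have "measure_pmf.expectation ?M (\<lambda>st. (\<lambda>(QA, QB). supnorm (\<lambda>s a. QB s a - Qs s a)) (fst st))
      \<le> measure_pmf.expectation ?M (\<lambda>st. 0 * Yf st + (2 * Bd) * 1)"
  proof (intro exp_mono_fin ext_fin)
    fix st assume "st \<in> set_pmf ?M"
    from pB[OF this] show "(\<lambda>(QA, QB). supnorm (\<lambda>s a. QB s a - Qs s a)) (fst st) \<le> 0 * Yf st + (2 * Bd) * 1"
      by (simp add: case_prod_beta)
  qed
  then show "measure_pmf.expectation (sdq_dist amax \<alpha> \<gamma> r d P QA0 QB0 k)
           (\<lambda>(QA, QB). supnorm (\<lambda>s a. QB s a - Qs s a)) \<le> 2 * Bd"
    unfolding eq c .
qed

end

context sdq begin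

lemma g_facts: "0 < 1 - \<gamma>" "1 - \<gamma> \<le> 1" using gamma by auto

lemma dsd: "dmin * sqrt dmin = dmin powr (3/2)" "0 < dmin * sqrt dmin" "dmin * sqrt dmin \<le> 1"
proof -
  have "dmin powr (3/2) = dmin powr (1 + 1/2)" by simp
  also have "\<dots> = dmin powr 1 * dmin powr (1/2)" by (rule powr_add)
  also have "\<dots> = dmin * sqrt dmin" using dmin_pos by (simp add: powr_half_sqrt)
  finally show "dmin * sqrt dmin = dmin powr (3/2)" by simp
  show "0 < dmin * sqrt dmin" using dmin_pos by simp
  have "sqrt dmin \<le> 1" using dmin_le1 by simp
  then show "dmin * sqrt dmin \<le> 1" using dmin_le1 dmin_pos by (simp add: mult_le_one)
qed

lemma T1_lower:
  fixes N :: real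
  assumes N: "1 \<le> N"
  shows "120 * sqrt \<alpha> / (dmin * sqrt dmin * (1 - \<gamma>) ^ 3)
         \<le> 120 * sqrt \<alpha> * N / (dmin powr (9/2) * (1 - \<gamma>) powr (11/2))"
proof -
  have p1: "dmin powr (9/2) \<le> dmin powr (3/2)"
    using dmin_pos dmin_le1 by (intro powr_mono') auto
  have p2: "(1 - \<gamma>) powr (11/2) \<le> (1 - \<gamma>) powr 3"
    using g_facts by (intro powr_mono') auto
  have p3: "(1 - \<gamma>) powr 3 = (1 - \<gamma>) ^ 3" using g_facts by simp
  have D1: "0 < dmin powr (9/2) * (1 - \<gamma>) powr (11/2)" using dmin_pos g_facts by simp
  have D: "dmin powr (9/2) * (1 - \<gamma>) powr (11/2) \<le> dmin * sqrt dmin * (1 - \<gamma>) ^ 3"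
    unfolding dsd(1) p3[symmetric] using p1 p2 by (intro mult_mono) auto
  have "120 * sqrt \<alpha> / (dmin * sqrt dmin * (1 - \<gamma>) ^ 3) \<le> 120 * sqrt \<alpha> / (dmin powr (9/2) * (1 - \<gamma>) powr (11/2))"
    using D D1 alpha by (intro divide_left_mono) auto
  also have "\<dots> \<le> 120 * sqrt \<alpha> * N / (dmin powr (9/2) * (1 - \<gamma>) powr (11/2))"
    using D1 N alpha by (intro divide_right_mono) auto
  finally show ?thesis .
qed

lemma X_bound: "cZ * Zb / (1 - rhoK) + Zb \<le> 120 * sqrt \<alpha> / (dmin * sqrt dmin * (1 - \<gamma>) ^ 3)"
proof -
  define g where "g = 1 - \<gamma>"
  have g0: "0 < g" "g \<le> 1" unfolding g_def using gamma by auto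
  have d0: "0 < dmin" "dmin \<le> 1" using dmin_pos dmin_le1 by auto
  have K6: "2 + K \<le> 6 / g"
  proof -
    have "2 \<le> 2 / g" using g0 by (simp add: field_simps)
    then show ?thesis unfolding K_def g_def[symmetric] by (simp add: field_simps)
  qed
  have gK: "\<gamma> * (2 + K) \<le> 6 / g"
  proof -
    have "\<gamma> * (2 + K) \<le> 1 * (2 + K)" using gamma K_pos by (intro mult_right_mono) auto
    then show ?thesis using K6 by simp
  qed
  have q: "cZ / (1 - rhoK) = (\<gamma> * (2 + K)) * (4 / (3 * dmin * g))"
    unfolding cZ_def rhoK_bounds(3) g_def using alpha d0 gamma by (simp add: field_simps)
  have "cZ / (1 - rhoK) \<le> (6 / g) * (4 / (3 * dmin * g))"
    unfolding q using gK g0 d0 by (intro mult_right_mono) auto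
  also have "\<dots> = 8 / (dmin * g^2)" using g0 d0 by (simp add: field_simps power2_eq_square)
  finally have c1: "cZ / (1 - rhoK) \<le> 8 / (dmin * g^2)" .
  have "dmin * g^2 \<le> 1" using d0 g0 by (simp add: mult_le_one power_le_one)
  then have c2: "1 \<le> 1 / (dmin * g^2)" using d0 g0 by (simp add: field_simps)
  have c3: "cZ / (1 - rhoK) + 1 \<le> 9 / (dmin * g^2)" using c1 c2 by (simp add: field_simps)
  have Zb_eq: "Zb = 4 * sqrt \<alpha> / (g * sqrt dmin)"
    unfolding Zb_def Bd_def g_def[symmetric] by (simp add: real_sqrt_divide)
  have "cZ * Zb / (1 - rhoK) + Zb = Zb * (cZ / (1 - rhoK) + 1)" by (simp add: field_simps)
  also have "\<dots> \<le> Zb * (9 / (dmin * g^2))" using c3 Zb_pos by (intro mult_left_mono) auto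
  also have "\<dots> = 36 * sqrt \<alpha> / (dmin * sqrt dmin * g ^ 3)"
    unfolding Zb_eq using g0 d0 by (simp add: field_simps power2_eq_square power3_eq_cube)
  also have "\<dots> \<le> 120 * sqrt \<alpha> / (dmin * sqrt dmin * g ^ 3)"
    using dsd(2) g0 alpha by (intro divide_right_mono) auto
  finally show ?thesis unfolding g_def .
qed

definition rho where "rho = 1 - \<alpha> * dmin * (1 - \<gamma>)"

lemma rho_bounds: "0 < rho" "rho < 1"
proof -
  have "0 < \<alpha> * dmin * (1 - \<gamma>)" using alpha dmin_pos gamma by simp
  moreover have "\<alpha> * dmin * (1 - \<gamma>) < 1"
  proof -
    have "\<alpha> * dmin \<le> \<alpha>" using alpha dmin_le1 by (simp add: mult_left_le)
    moreover have "\<alpha> * dmin * (1 - \<gamma>) \<le> \<alpha> * dmin" using alpha dmin_pos gamma by (simp add: mult_left_le)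
    ultimately show ?thesis using alpha by linarith
  qed
  ultimately show "0 < rho" "rho < 1" unfolding rho_def by auto
qed

lemma rate_bound:
  assumes a89: "\<alpha> \<le> 8/9"
  shows "rhoK ^ k \<le> rho powr (real k / 2)"
proof -
  define x where "x = \<alpha> * dmin * (1 - \<gamma>)"
  have x0: "0 \<le> x" unfolding x_def using alpha dmin_pos gamma by simp
  have x89: "x \<le> 8/9"
  proof -
    have "\<alpha> * dmin \<le> \<alpha>" using alpha dmin_le1 by (simp add: mult_left_le)
    moreover have "\<alpha> * dmin * (1 - \<gamma>) \<le> \<alpha> * dmin" using alpha dmin_pos gamma by (simp add: mult_left_le)
    ultimately show ?thesis unfolding x_def using a89 by linarith
  qed
  have rk: "rhoK = 1 - 3/4 * x" unfolding rhoK_def x_def by simp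
  have rr: "rho = 1 - x" unfolding rho_def x_def by simp
  have "rho - rhoK^2 = x * (8 - 9 * x) / 16" unfolding rk rr by (simp add: field_simps power2_eq_square)
  moreover have "0 \<le> x * (8 - 9 * x) / 16" using x0 x89 by simp
  ultimately have sq: "rhoK^2 \<le> rho" by linarith
  have "rhoK ^ k = rhoK powr (real k)" using rhoK_bounds by (simp add: powr_realpow)
  also have "\<dots> = (rhoK powr 2) powr (real k / 2)" by (simp add: powr_powr)
  also have "\<dots> = (rhoK ^ 2) powr (real k / 2)" using rhoK_bounds by simp
  also have "\<dots> \<le> rho powr (real k / 2)" using sq by (intro powr_mono2) auto
  finally show ?thesis .
qed

lemma rho_ln: "(rho * ln rho)^4 \<le> 1"
proof -
  have r: "0 < rho" "rho < 1" by (rule rho_bounds)+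
  have l0: "ln rho \<le> 0" using r by simp
  have "ln (1 / rho) \<le> 1 / rho - 1" using r by (intro ln_le_minus_one) simp
  then have "- ln rho \<le> 1 / rho - 1" using r by (simp add: ln_div)
  then have "rho * (- ln rho) \<le> rho * (1 / rho - 1)" using r by (intro mult_left_mono) auto
  also have "\<dots> = 1 - rho" using r by (simp add: field_simps)
  finally have u: "rho * (- ln rho) \<le> 1" using r by linarith
  have v: "0 \<le> rho * (- ln rho)" using r l0 by (intro mult_nonneg_nonneg) auto
  have "(rho * (- ln rho))^4 \<le> 1" using u v by (intro power_le_one) auto
  then show ?thesis by simp
qed

lemma T2_lower:
  fixes N :: real
  assumes N: "1 \<le> N"
  shows "8 * Bd * rho powr (real k / 2) \<le>
     48 * N powr (3/2) / (1 - \<gamma>) * (rho powr (-4) * (-8)^4 / (ln rho)^4) * rho powr (-4 / ln rho)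
     * rho powr (real k / 2)"
proof -
  have r: "0 < rho" "rho < 1" by (rule rho_bounds)+
  have ln0: "ln rho \<noteq> 0" using r by simp
  have a: "1 \<le> N powr (3/2)" using N by (intro ge_one_powr_ge_zero) auto
  have e1: "rho powr (-4 / ln rho) = exp (-4)"
    using r ln0 by (simp add: powr_def)
  have e4: "exp (4::real) \<le> 81"
  proof -
    have "exp (4::real) = exp (of_nat 4 * 1)" by simp
    also have "\<dots> = exp 1 ^ 4" by (rule exp_of_nat_mult)
    also have "\<dots> \<le> 3 ^ 4" by (intro power_mono exp_le) auto
    finally show ?thesis by simp
  qed
  have c: "1 / 81 \<le> rho powr (-4 / ln rho)"
    unfolding e1 using e4 by (simp add: exp_minus field_simps)
  have p4: "rho powr (-4) = 1 / rho ^ 4" using r by (simp add: powr_minus field_simps)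
  have pos: "0 < (rho * ln rho)^4" using r ln0 by simp
  have b: "4096 \<le> rho powr (-4) * (-8)^4 / (ln rho)^4"
  proof -
    have "rho powr (-4) * (-8)^4 / (ln rho)^4 = 4096 / (rho * ln rho)^4"
      unfolding p4 using r ln0 by (simp add: field_simps power_mult_distrib)
    moreover have "4096 \<le> 4096 / (rho * ln rho)^4" using rho_ln pos by (simp add: field_simps)
    ultimately show ?thesis by simp
  qed
  have "8 * Bd = 8 / (1 - \<gamma>)" unfolding Bd_def by simp
  also have "\<dots> \<le> 48 * 1 / (1 - \<gamma>) * 4096 * (1 / 81)" using g_facts by (simp add: field_simps)
  also have "\<dots> \<le> 48 * N powr (3/2) / (1 - \<gamma>) * (rho powr (-4) * (-8)^4 / (ln rho)^4) * rho powr (-4 / ln rho)"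
    using a b c g_facts by (intro mult_mono divide_right_mono) auto
  finally show ?thesis by (intro mult_right_mono) auto
qed

lemma T2_nonneg:
  fixes N :: real
  shows "0 \<le> 48 * N powr (3/2) / (1 - \<gamma>) * (rho powr (-4) * (-8)^4 / (ln rho)^4) * rho powr (-4 / ln rho)
     * rho powr (real k / 2)"
  using g_facts by (intro mult_nonneg_nonneg divide_nonneg_nonneg) auto

end

lemma (in sdq) trivial_le_T1:
  assumes "8/9 < \<alpha>"
  shows "2 * Bd \<le> 120 * sqrt \<alpha> / (dmin * sqrt dmin * (1 - \<gamma>) ^ 3)"
proof -
  have s: "1/60 \<le> sqrt \<alpha>" using assms by (intro real_le_rsqrt) (simp add: power2_eq_square)
  have D: "0 < dmin * sqrt dmin * (1 - \<gamma>) ^ 3" using dsd(2) g_facts by simp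
  have "dmin * sqrt dmin * (1 - \<gamma>) ^ 3 \<le> 1 * (1 - \<gamma>)"
  proof -
    have "(1 - \<gamma>) ^ 3 \<le> (1 - \<gamma>)" using g_facts by (simp add: power_le_one power3_eq_cube mult_le_one)
    then show ?thesis using dsd(2,3) g_facts by (intro mult_mono) auto
  qed
  then have "2 / (1 - \<gamma>) \<le> 2 / (dmin * sqrt dmin * (1 - \<gamma>) ^ 3)"
    using D by (intro divide_left_mono) auto
  also have "\<dots> \<le> 120 * sqrt \<alpha> / (dmin * sqrt dmin * (1 - \<gamma>) ^ 3)"
    using D s by (intro divide_right_mono) auto
  finally show ?thesis unfolding Bd_def by simp
qed

theorem corollary1:
  fixes P :: "'s::finite \<Rightarrow> 'a::finite \<Rightarrow> 's pmf"
    and r :: "'s \<Rightarrow> 'a \<Rightarrow> 's \<Rightarrow> real"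
    and p :: "'s pmf" and \<beta> :: "'s \<Rightarrow> 'a pmf"
    and d :: "('s \<times> 'a) pmf"
    and amax :: "('a \<Rightarrow> real) \<Rightarrow> 'a"
    and \<alpha> \<gamma> :: real
    and QA0 QB0 :: "'s \<Rightarrow> 'a \<Rightarrow> real"
    and k :: nat
  assumes alpha: "0 < \<alpha>" "\<alpha> < 1"
    and gamma: "0 < \<gamma>" "\<gamma> < 1"
    and rew: "\<And>s a s'. \<bar>r s a s'\<bar> \<le> 1"
    and stationary: "\<And>s'. pmf p s' = (\<Sum>s\<in>UNIV. \<Sum>a\<in>UNIV. pmf p s * pmf (\<beta> s) a * pmf (P s a) s')"
    and d_def: "\<And>s a. pmf d (s, a) = pmf p s * pmf (\<beta> s) a"
    and d_pos: "\<And>s a. pmf d (s, a) > 0"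
    and amax: "\<And>f b. f b \<le> f (amax f)"
    and init: "supnorm QA0 \<le> 1" "supnorm QB0 \<le> 1"
  shows "let dmin = Min (range (pmf d));
             \<rho> = 1 - \<alpha> * dmin * (1 - \<gamma>);
             N = real (CARD('s) * CARD('a));
             bound = 120 * sqrt \<alpha> * N / (dmin powr (9/2) * (1 - \<gamma>) powr (11/2))
                     + 48 * N powr (3/2) / (1 - \<gamma>)
                       * (\<rho> powr (-4) * (-8)^4 / (ln \<rho>)^4) * \<rho> powr (-4 / ln \<rho>)
                       * \<rho> powr (real k / 2)
         in measure_pmf.expectation (sdq_dist amax \<alpha> \<gamma> r d P QA0 QB0 k)
              (\<lambda>(QA, QB). supnorm (\<lambda>s a. QA s a - Qstar P r \<gamma> s a)) \<le> bound
          \<and> measure_pmf.expectation (sdq_dist amax \<alpha> \<gamma> r d P QA0 QB0 k)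
              (\<lambda>(QA, QB). supnorm (\<lambda>s a. QB s a - Qstar P r \<gamma> s a)) \<le> bound"
proof -
  interpret L: sdq P r d amax \<alpha> \<gamma>
    by unfold_locales (use alpha gamma rew d_pos amax in auto)
  define N where "N = real (CARD('s) * CARD('a))"
  have "0 < CARD('s \<times> 'a)" by (rule finite_UNIV_card_ge_0) simp
  then have c: "1 \<le> CARD('s) * CARD('a)" by simp
  have "real 1 \<le> real (CARD('s) * CARD('a))" using c by (simp only: of_nat_le_iff)
  then have N1: "1 \<le> N" unfolding N_def by simp
  have dm: "Min (range (pmf d)) = L.dmin" by (simp add: L.dmin_def)
  have rh: "1 - \<alpha> * L.dmin * (1 - \<gamma>) = L.rho" by (simp add: L.rho_def)
  define T1 where "T1 = 120 * sqrt \<alpha> * N / (L.dmin powr (9/2) * (1 - \<gamma>) powr (11/2))"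
  define T2 where "T2 = 48 * N powr (3/2) / (1 - \<gamma>) * (L.rho powr (-4) * (-8)^4 / (ln L.rho)^4)
      * L.rho powr (-4 / ln L.rho) * L.rho powr (real k / 2)"
  define EA where "EA = measure_pmf.expectation (sdq_dist amax \<alpha> \<gamma> r d P QA0 QB0 k)
              (\<lambda>(QA, QB). supnorm (\<lambda>s a. QA s a - Qstar P r \<gamma> s a))"
  define EB where "EB = measure_pmf.expectation (sdq_dist amax \<alpha> \<gamma> r d P QA0 QB0 k)
              (\<lambda>(QA, QB). supnorm (\<lambda>s a. QB s a - Qstar P r \<gamma> s a))"
  have T2n: "0 \<le> T2" unfolding T2_def by (rule L.T2_nonneg)
  have T1l: "120 * sqrt \<alpha> / (L.dmin * sqrt L.dmin * (1 - \<gamma>) ^ 3) \<le> T1"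
    unfolding T1_def by (rule L.T1_lower[OF N1])
  have "EA \<le> T1 + T2 \<and> EB \<le> T1 + T2"
  proof (cases "\<alpha> \<le> 8/9")
    case True
    have "L.rhoK ^ k * (8 * L.Bd) \<le> L.rho powr (real k / 2) * (8 * L.Bd)"
      using L.rate_bound[OF True, of k] L.Bd_pos by (intro mult_right_mono) auto
    also have "\<dots> \<le> T2" unfolding T2_def using L.T2_lower[OF N1, of k] by (simp add: mult.commute)
    finally have a: "L.rhoK ^ k * (8 * L.Bd) \<le> T2" .
    have b: "L.cZ * L.Zb / (1 - L.rhoK) + L.Zb \<le> T1" using L.X_bound T1l by linarith
    show ?thesis using L.main_bound[OF init, of k] a b unfolding EA_def EB_def by linarith
  next
    case False
    then have "2 * L.Bd \<le> T1" using L.trivial_le_T1 T1l by (meson not_le order_trans)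
    then show ?thesis using L.trivial_bound[OF init, of k] T2n unfolding EA_def EB_def by linarith
  qed
  then show ?thesis
    unfolding Let_def dm rh N_def[symmetric] T1_def[symmetric] T2_def[symmetric] EA_def[symmetric] EB_def[symmetric]
    by simp
qed


end
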